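(* Let $W$ be the set of matrices $\left(\begin{array}{cc} a & b \\ c & d\end{array}\right)$ in $SL(2,\mathbb{R})$ such that $d>0$ and $|bd|<\frac12$. The map $(t,\theta,u)\mapsto g_t R_\theta n_u$ from $\mathbb{R}\times(-\frac{\pi}{4},\frac{\pi}{4})\times\mathbb{R}$ to $SL(2,\mathbb{R})$ is a diffeomorphism onto $W$. Using this map to take $(t,\theta,u)$ as coordinates on $W$, the restriction to $W$ of (a conveniently scaled version of) the Haar measure of $SL(2,\mathbb{R})$ is equal to $\cos 2\theta\, dt\, d\theta\, du$.
   Context: Here $g_t$ denotes the diagonal matrix $\mathrm{diag}(e^t,e^{-t})$ in $SL(2,\mathbb{R})$, $R_\theta\in SO(2,\mathbb{R})$ denotes the rotation of angle $\theta$, and $n_u$ denotes the lower triangular matrix $\left(\begin{array}{cc} 1 & 0 \\ u & 1\end{array}\right)$. *)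

theory Defs
  imports "HOL-Analysis.Analysis"
begin

text \<open>2x2 real matrices are \<open>real^2^2\<close>; entry (i,j) is \<open>M $ i $ j\<close>.\<close>

definition SL2 :: "(real^2^2) set" where
  "SL2 = {M. det M = 1}"

definition mat2 :: "real \<Rightarrow> real \<Rightarrow> real \<Rightarrow> real \<Rightarrow> real^2^2" where
  "mat2 a b c d = vector [vector [a, b], vector [c, d]]"

definition g_diag :: "real \<Rightarrow> real^2^2" where
  "g_diag t = mat2 (exp t) 0 0 (exp (- t))"

definition rot :: "real \<Rightarrow> real^2^2" where
  "rot \<theta> = mat2 (cos \<theta>) (- sin \<theta>) (sin \<theta>) (cos \<theta>)"

definition n_low :: "real \<Rightarrow> real^2^2" where
  "n_low u = mat2 1 0 u 1"

definition W_set :: "(real^2^2) set" where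
  "W_set = {M \<in> SL2. M $ 2 $ 2 > 0 \<and> \<bar>M $ 1 $ 2 * M $ 2 $ 2\<bar> < 1 / 2}"

definition coord_dom :: "(real \<times> real \<times> real) set" where
  "coord_dom = UNIV \<times> {- pi / 4 <..< pi / 4} \<times> UNIV"

definition coord_map :: "real \<times> real \<times> real \<Rightarrow> real^2^2" where
  "coord_map p = (case p of (t, \<theta>, u) \<Rightarrow> g_diag t ** rot \<theta> ** n_low u)"

fun cont_diff :: "nat \<Rightarrow> 'a::real_normed_vector set \<Rightarrow> ('a \<Rightarrow> 'b::real_normed_vector) \<Rightarrow> bool" where
  "cont_diff 0 S f = continuous_on S f"
| "cont_diff (Suc k) S f =
     ((\<forall>x\<in>S. f differentiable (at x)) \<and> (\<forall>v. cont_diff k S (\<lambda>x. frechet_derivative f (at x) v)))"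

definition smooth_on :: "'a::real_normed_vector set \<Rightarrow> ('a \<Rightarrow> 'b::real_normed_vector) \<Rightarrow> bool" where
  "smooth_on S f \<longleftrightarrow> (\<forall>k. cont_diff k S f)"

text \<open>A (left) Haar measure on SL(2,R), realised as a Borel measure on the ambient space
  of 2x2 matrices concentrated on the closed subgroup SL2: left-invariant under SL2,
  finite on compact sets, positive on nonempty (relatively) open subsets of SL2.\<close>
definition haar_SL2 :: "(real^2^2) measure \<Rightarrow> bool" where
  "haar_SL2 \<mu> \<longleftrightarrow>
     sets \<mu> = sets borel \<and>
     emeasure \<mu> (UNIV - SL2) = 0 \<and>
     (\<forall>g\<in>SL2. \<forall>A\<in>sets borel. emeasure \<mu> ((\<lambda>x. g ** x) ` A) = emeasure \<mu> A) \<and>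
     (\<forall>K. compact K \<longrightarrow> emeasure \<mu> K < \<infinity>) \<and>
     (\<forall>U. openin (top_of_set SL2) U \<and> U \<noteq> {} \<longrightarrow> emeasure \<mu> U > 0)"

end

theory Submission
  imports Defs
begin

lemma mat2_nth [simp]:
  "mat2 a b c d $ 1 $ 1 = a" "mat2 a b c d $ 1 $ 2 = b"
  "mat2 a b c d $ 2 $ 1 = c" "mat2 a b c d $ 2 $ 2 = d"
  by (simp_all add: mat2_def)

lemma mat2_eq_iff: "(M :: real^2^2) = N \<longleftrightarrow> M$1$1 = N$1$1 \<and> M$1$2 = N$1$2 \<and> M$2$1 = N$2$1 \<and> M$2$2 = N$2$2"
  by (auto simp: vec_eq_iff forall_2)

lemma mat2_mult: "mat2 a b c d ** mat2 a' b' c' d' = mat2 (a*a'+b*c') (a*b'+b*d') (c*a'+d*c') (c*b'+d*d')"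
  by (simp add: mat2_eq_iff matrix_matrix_mult_def sum_2)

lemma det_mat2: "det (mat2 a b c d) = a*d - b*c"
  by (simp add: det_2)

lemma coord_map_eq: "coord_map (t,\<theta>,u) = mat2 (exp t * (cos \<theta> - u * sin \<theta>)) (- exp t * sin \<theta>)
    (exp (-t) * (sin \<theta> + u * cos \<theta>)) (exp (-t) * cos \<theta>)"
  by (simp add: coord_map_def g_diag_def rot_def n_low_def mat2_mult algebra_simps)

lemma mat2_of: "(M::real^2^2) = mat2 (M$1$1) (M$1$2) (M$2$1) (M$2$2)"
  by (simp add: mat2_eq_iff)

definition th :: "real^2^2 \<Rightarrow> real" where "th M = - arcsin (2 * (M$1$2 * M$2$2)) / 2"
definition Psi :: "real^2^2 \<Rightarrow> real \<times> real \<times> real" where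
  "Psi M = (ln (cos (th M) / M$2$2), th M, M$2$1 / M$2$2 - tan (th M))"

lemma abs_sin_lt1: "\<bar>x\<bar> < pi/2 \<Longrightarrow> \<bar>sin x\<bar> < 1"
proof -
  assume "\<bar>x\<bar> < pi/2"
  then have "cos x > 0" by (intro cos_gt_zero_pi) auto
  moreover have "sin x ^2 + cos x ^2 = 1" by simp
  ultimately have "sin x ^ 2 < 1" by (smt (verit) zero_less_power)
  then show ?thesis by (simp add: abs_square_less_1)
qed

lemma coord_dom_iff: "p \<in> coord_dom \<longleftrightarrow> \<bar>fst (snd p)\<bar> < pi/4"
  by (cases p) (auto simp: coord_dom_def)

lemma cm_in_W: assumes "\<bar>\<theta>\<bar> < pi/4" shows "coord_map (t,\<theta>,u) \<in> W_set"
proof -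
  have c: "cos \<theta> > 0" using assms by (intro cos_gt_zero_pi) auto
  have "\<bar>sin (2*\<theta>)\<bar> < 1" using assms by (intro abs_sin_lt1) auto
  then have s: "\<bar>sin \<theta> * cos \<theta>\<bar> < 1/2" by (simp add: sin_double)
  have e: "exp t * exp (-t) = 1" by (simp add: exp_minus)
  have "det (coord_map (t,\<theta>,u)) = sin \<theta> ^2 + cos \<theta> ^2"
  proof -
    have "det (coord_map (t,\<theta>,u)) = (exp t * exp (-t)) * (sin \<theta> ^2 + cos \<theta> ^2)"
      by (simp only: coord_map_eq det_mat2) algebra
    then show ?thesis by (simp only: e mult_1)
  qed
  then have "det (coord_map (t,\<theta>,u)) = 1" by simp
  moreover have "(- exp t * sin \<theta>) * (exp (-t) * cos \<theta>) = - (sin \<theta> * cos \<theta>)"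
  proof -
    have "(- exp t * sin \<theta>) * (exp (-t) * cos \<theta>) = - ((exp t * exp (-t)) * (sin \<theta> * cos \<theta>))"
      by algebra
    then show ?thesis by (simp only: e mult_1)
  qed
  then have "coord_map (t,\<theta>,u) $1$2 * coord_map (t,\<theta>,u) $2$2 = - (sin \<theta> * cos \<theta>)"
    by (simp only: coord_map_eq mat2_nth)
  moreover have "coord_map (t,\<theta>,u) $2$2 > 0" using c by (simp only: coord_map_eq mat2_nth) simp
  ultimately show ?thesis using s unfolding W_set_def SL2_def mem_Collect_eq by (simp add: abs_minus_cancel)
qed

lemma Psi_cm: assumes "\<bar>\<theta>\<bar> < pi/4" shows "Psi (coord_map (t,\<theta>,u)) = (t,\<theta>,u)"
proof -
  have c: "cos \<theta> > 0" using assms by (intro cos_gt_zero_pi) auto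
  have e: "exp t * exp (-t) = 1" by (simp add: exp_minus)
  have "(- exp t * sin \<theta>) * (exp (-t) * cos \<theta>) = - (sin (2*\<theta>)/2)"
  proof -
    have "(- exp t * sin \<theta>) * (exp (-t) * cos \<theta>) = - ((exp t * exp (-t)) * (sin \<theta> * cos \<theta>))"
      by algebra
    then show ?thesis by (simp only: e mult_1 sin_double)
  qed
  then have "2 * ((- exp t * sin \<theta>) * (exp (-t) * cos \<theta>)) = - sin (2*\<theta>)" by simp
  moreover have "arcsin (sin (2*\<theta>)) = 2*\<theta>" using assms by (intro arcsin_sin) auto
  ultimately have th: "th (coord_map (t,\<theta>,u)) = \<theta>"
    by (simp add: th_def coord_map_eq arcsin_minus)
  have c0: "cos \<theta> \<noteq> 0" using c by simp
  have "cos \<theta> / (exp (-t) * cos \<theta>) = exp t" using c0 by (simp add: exp_minus field_simps)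
  then have t: "ln (cos \<theta> / (exp (-t) * cos \<theta>)) = t" by simp
  have u: "exp (- t) * (sin \<theta> + u * cos \<theta>) / (exp (- t) * cos \<theta>) - tan \<theta> = u"
    using c0 by (simp add: tan_def field_simps)
  show ?thesis using th t u by (simp add: Psi_def coord_map_eq)
qed

lemma det_aux: "n * (d::real) - b * c = 1 \<Longrightarrow> a * d - b * c = 1 \<Longrightarrow> d > 0 \<Longrightarrow> n = a"
proof -
  assume "n * d - b * c = 1" "a * d - b * c = 1" "d > 0"
  then have "(n - a) * d = 0" by (simp add: algebra_simps)
  then show "n = a" using \<open>d > 0\<close> by simp
qed

lemma W_props: assumes "M \<in> W_set"
  shows "det M = 1" "M$2$2 > 0" "\<bar>M$1$2 * M$2$2\<bar> < 1/2"
  using assms by (auto simp: W_set_def SL2_def)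

lemma th_bound: assumes "\<bar>M$1$2 * M$2$2\<bar> < 1/2" shows "\<bar>th M\<bar> < pi/4"
proof -
  have h: "-1 < 2 * (M$1$2 * M$2$2)" "2 * (M$1$2 * M$2$2) < 1" using assms by auto
  have "arcsin (2 * (M$1$2 * M$2$2)) < pi/2"
    using arcsin_lt_bounded[OF h] by simp
  moreover have "- (pi/2) < arcsin (2 * (M$1$2 * M$2$2))"
    using arcsin_lt_bounded[OF h] by simp
  ultimately show ?thesis by (simp add: th_def abs_less_iff)
qed

lemma sin_th: assumes "\<bar>M$1$2 * M$2$2\<bar> < 1/2"
  shows "sin (th M) * cos (th M) = - (M$1$2 * M$2$2)"
proof -
  have h: "-1 \<le> 2 * (M$1$2 * M$2$2)" "2 * (M$1$2 * M$2$2) \<le> 1" using assms by auto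
  have "sin (2 * th M) = - (2 * (M$1$2 * M$2$2))"
    using sin_arcsin[OF h] by (simp add: th_def)
  moreover have "sin (2 * th M) = 2 * sin (th M) * cos (th M)" by (rule sin_double)
  ultimately show ?thesis by linarith
qed

lemma cm_Psi: assumes "M \<in> W_set" shows "coord_map (Psi M) = M" "Psi M \<in> coord_dom"
proof -
  note W = W_props[OF assms]
  let ?a = "M$1$1" and ?b = "M$1$2" and ?c = "M$2$1" and ?d = "M$2$2" and ?t = "th M"
  have tb: "\<bar>?t\<bar> < pi/4" by (rule th_bound[OF W(3)])
  then have c: "cos ?t > 0" by (intro cos_gt_zero_pi) auto
  have sc: "sin ?t * cos ?t = - (?b * ?d)" by (rule sin_th[OF W(3)])
  have d: "?d > 0" by (rule W(2))
  have e1: "exp (ln (cos ?t / ?d)) = cos ?t / ?d" using c d by simp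
  have e2: "exp (- ln (cos ?t / ?d)) = ?d / cos ?t" using c d by (simp add: exp_minus)
  let ?N = "coord_map (Psi M)"
  have N: "?N = coord_map (ln (cos ?t / ?d), ?t, ?c / ?d - tan ?t)" by (simp add: Psi_def)
  have d0: "?d \<noteq> 0" and c0: "cos ?t \<noteq> 0" using c d by auto
  have b1: "- (cos ?t / ?d) * sin ?t = ?b" using d0 sc by (simp add: field_simps)
  have b: "?N $1$2 = ?b" unfolding N coord_map_eq mat2_nth e1 by (rule b1)
  have dd: "?N $2$2 = ?d" unfolding N coord_map_eq mat2_nth e2 using c0 by simp
  have c1: "(?d / cos ?t) * (sin ?t + (?c / ?d - tan ?t) * cos ?t) = ?c"
    using d0 c0 by (simp add: tan_def field_simps)
  have cc: "?N $2$1 = ?c" unfolding N coord_map_eq mat2_nth e2 by (rule c1)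
  have "det ?N = 1" using cm_in_W[of ?t] tb W_props by (simp add: Psi_def)
  then have "?N$1$1 * ?d - ?b * ?c = 1" using b dd cc by (simp add: det_2)
  moreover have "?a * ?d - ?b * ?c = 1" using W(1) by (simp add: det_2)
  ultimately have "?N$1$1 = ?a" using d by (rule det_aux)
  then show "coord_map (Psi M) = M" using b dd cc by (simp add: mat2_eq_iff)
  show "Psi M \<in> coord_dom" using tb by (simp add: coord_dom_iff Psi_def)
qed

lemma bij: "bij_betw coord_map coord_dom W_set"
proof (rule bij_betw_byWitness[where f'=Psi])
  show "\<forall>p\<in>coord_dom. Psi (coord_map p) = p" using Psi_cm coord_dom_iff by auto
  show "\<forall>M\<in>W_set. coord_map (Psi M) = M" using cm_Psi by auto
  show "coord_map ` coord_dom \<subseteq> W_set" using cm_in_W coord_dom_iff by auto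
  show "Psi ` W_set \<subseteq> coord_dom" using cm_Psi by auto
qed

inductive_set sm :: "'a::real_normed_vector set \<Rightarrow> ('a \<Rightarrow> real) set" for S where
  sm_const: "(\<lambda>x. c) \<in> sm S"
| sm_lin: "bounded_linear L \<Longrightarrow> L \<in> sm S"
| sm_add: "f \<in> sm S \<Longrightarrow> g \<in> sm S \<Longrightarrow> (\<lambda>x. f x + g x) \<in> sm S"
| sm_mul: "f \<in> sm S \<Longrightarrow> g \<in> sm S \<Longrightarrow> (\<lambda>x. f x * g x) \<in> sm S"
| sm_exp: "f \<in> sm S \<Longrightarrow> (\<lambda>x. exp (f x)) \<in> sm S"
| sm_sin: "f \<in> sm S \<Longrightarrow> (\<lambda>x. sin (f x)) \<in> sm S"
| sm_cos: "f \<in> sm S \<Longrightarrow> (\<lambda>x. cos (f x)) \<in> sm S"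
| sm_inv: "f \<in> sm S \<Longrightarrow> (\<And>x. x \<in> S \<Longrightarrow> f x \<noteq> 0) \<Longrightarrow> (\<lambda>x. inverse (f x)) \<in> sm S"
| sm_sqrt: "f \<in> sm S \<Longrightarrow> (\<And>x. x \<in> S \<Longrightarrow> f x > 0) \<Longrightarrow> (\<lambda>x. sqrt (f x)) \<in> sm S"
| sm_ln: "f \<in> sm S \<Longrightarrow> (\<And>x. x \<in> S \<Longrightarrow> f x > 0) \<Longrightarrow> (\<lambda>x. ln (f x)) \<in> sm S"
| sm_arcsin: "f \<in> sm S \<Longrightarrow> (\<And>x. x \<in> S \<Longrightarrow> \<bar>f x\<bar> < 1) \<Longrightarrow> (\<lambda>x. arcsin (f x)) \<in> sm S"
| sm_cong: "f \<in> sm S \<Longrightarrow> (\<And>x. x \<in> S \<Longrightarrow> f x = g x) \<Longrightarrow> g \<in> sm S"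

lemmas smi = sm.sm_const sm.sm_add sm.sm_mul sm.sm_exp sm.sm_sin sm.sm_cos sm.sm_inv sm.sm_sqrt sm.sm_ln sm.sm_arcsin

lemma sm_compose_deriv:
  assumes "f \<in> sm S" "\<And>v. (\<lambda>x. f' x v) \<in> sm S" "h' \<in> sm S"
  shows "\<And>v. (\<lambda>x. f' x v * h' x) \<in> sm S"
  using assms by (intro sm_mul) auto

lemma sm_chain:
  assumes f: "\<forall>x\<in>S. (f has_derivative f' x) (at x)" "\<forall>v. (\<lambda>x. f' x v) \<in> sm S"
    and h: "\<forall>x\<in>S. DERIV h (f x) :> h' x" and hm: "h' \<in> sm S"
  shows "\<exists>F. (\<forall>x\<in>S. ((\<lambda>x. h (f x)) has_derivative F x) (at x)) \<and> (\<forall>v. (\<lambda>x. F x v) \<in> sm S)"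
proof (intro exI[of _ "\<lambda>x v. f' x v * h' x"] conjI ballI allI)
  fix x assume "x \<in> S"
  then show "((\<lambda>x. h (f x)) has_derivative (\<lambda>v. f' x v * h' x)) (at x)"
    using f h by (auto intro: DERIV_compose_FDERIV)
next
  fix v show "(\<lambda>x. f' x v * h' x) \<in> sm S" by (rule sm.sm_mul) (use f hm in auto)
qed

lemma sm_deriv:
  assumes S: "open S"
  shows "f \<in> sm S \<Longrightarrow> \<exists>f'. (\<forall>x\<in>S. (f has_derivative f' x) (at x)) \<and> (\<forall>v. (\<lambda>x. f' x v) \<in> sm S)"
proof (induction rule: sm.induct)
  case (sm_const c)
  show ?case by (intro exI[of _ "\<lambda>x v. 0"]) (auto intro: smi)
next
  case (sm_lin L)
  then show ?case by (intro exI[of _ "\<lambda>x. L"]) (auto intro: smi bounded_linear_imp_has_derivative)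
next
  case (sm_add f g)
  then obtain f' g' where f: "\<forall>x\<in>S. (f has_derivative f' x) (at x)" "\<forall>v. (\<lambda>x. f' x v) \<in> sm S"
    and g: "\<forall>x\<in>S. (g has_derivative g' x) (at x)" "\<forall>v. (\<lambda>x. g' x v) \<in> sm S" by blast
  have "\<forall>x\<in>S. ((\<lambda>x. f x + g x) has_derivative (\<lambda>v. f' x v + g' x v)) (at x)"
    using f g by (auto intro: has_derivative_add)
  moreover have "\<forall>v. (\<lambda>x. f' x v + g' x v) \<in> sm S" proof
    fix v
    show "(\<lambda>x. f' x v + g' x v) \<in> sm S"
      by (rule sm.sm_add) (use f g in auto)
  qed
  ultimately show ?case by (intro exI[of _ "\<lambda>x v. f' x v + g' x v"]) auto
next
  case (sm_mul f g)
  then obtain f' g' where f: "\<forall>x\<in>S. (f has_derivative f' x) (at x)" "\<forall>v. (\<lambda>x. f' x v) \<in> sm S"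
    and g: "\<forall>x\<in>S. (g has_derivative g' x) (at x)" "\<forall>v. (\<lambda>x. g' x v) \<in> sm S" by blast
  have "\<forall>x\<in>S. ((\<lambda>x. f x * g x) has_derivative (\<lambda>v. f x * g' x v + f' x v * g x)) (at x)"
    using f g by (auto intro: has_derivative_mult)
  moreover have "\<forall>v. (\<lambda>x. f x * g' x v + f' x v * g x) \<in> sm S"
  proof
    fix v
    show "(\<lambda>x. f x * g' x v + f' x v * g x) \<in> sm S"
      by (rule sm.sm_add; rule sm.sm_mul) (use f g sm_mul.hyps in auto)
  qed
  ultimately show ?case by (intro exI[of _ "\<lambda>x v. f x * g' x v + f' x v * g x"]) auto
next
  case (sm_exp f)
  then obtain f' where f: "\<forall>x\<in>S. (f has_derivative f' x) (at x)" "\<forall>v. (\<lambda>x. f' x v) \<in> sm S" by blast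
  show ?case by (rule sm_chain[OF f _ sm.sm_exp[OF sm_exp.hyps]]) (auto intro: DERIV_exp)
next
  case (sm_sin f)
  then obtain f' where f: "\<forall>x\<in>S. (f has_derivative f' x) (at x)" "\<forall>v. (\<lambda>x. f' x v) \<in> sm S" by blast
  show ?case by (rule sm_chain[OF f _ sm.sm_cos[OF sm_sin.hyps]]) (auto intro: DERIV_sin)
next
  case (sm_cos f)
  then obtain f' where f: "\<forall>x\<in>S. (f has_derivative f' x) (at x)" "\<forall>v. (\<lambda>x. f' x v) \<in> sm S" by blast
  have m: "(\<lambda>x. (-1) * sin (f x)) \<in> sm S" by (rule sm.sm_mul[OF sm.sm_const sm.sm_sin[OF sm_cos.hyps]])
  then have m: "(\<lambda>x. - sin (f x)) \<in> sm S" by simp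
  show ?case by (rule sm_chain[OF f _ m]) (auto intro: DERIV_cos)
next
  case (sm_inv f)
  then obtain f' where f: "\<forall>x\<in>S. (f has_derivative f' x) (at x)" "\<forall>v. (\<lambda>x. f' x v) \<in> sm S" by blast
  have i: "(\<lambda>x. inverse (f x)) \<in> sm S" by (rule sm.sm_inv) (use sm_inv.hyps in auto)
  have m: "(\<lambda>x. (-1) * (inverse (f x) * inverse (f x))) \<in> sm S"
    by (rule sm.sm_mul[OF sm.sm_const sm.sm_mul[OF i i]])
  then have m: "(\<lambda>x. - (inverse (f x) ^ Suc (Suc 0))) \<in> sm S" by (simp add: power2_eq_square)
  have "\<forall>x\<in>S. DERIV inverse (f x) :> - (inverse (f x) ^ Suc (Suc 0))"
    using sm_inv.hyps(2) DERIV_inverse by blast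
  then show ?case by (rule sm_chain[OF f _ m])
next
  case (sm_sqrt f)
  then obtain f' where f: "\<forall>x\<in>S. (f has_derivative f' x) (at x)" "\<forall>v. (\<lambda>x. f' x v) \<in> sm S" by blast
  have q: "(\<lambda>x. sqrt (f x)) \<in> sm S" by (rule sm.sm_sqrt) (use sm_sqrt.hyps in auto)
  have i: "(\<lambda>x. inverse (sqrt (f x))) \<in> sm S" by (rule sm.sm_inv[OF q]) (use sm_sqrt.hyps(2) in force)
  have m: "(\<lambda>x. inverse (sqrt (f x)) * (1/2)) \<in> sm S" by (rule sm.sm_mul[OF i sm.sm_const])
  then have m: "(\<lambda>x. inverse (sqrt (f x)) / 2) \<in> sm S" by simp
  show ?case by (rule sm_chain[OF f _ m]) (use sm_sqrt.hyps(2) in \<open>auto intro: DERIV_real_sqrt\<close>)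
next
  case (sm_ln f)
  then obtain f' where f: "\<forall>x\<in>S. (f has_derivative f' x) (at x)" "\<forall>v. (\<lambda>x. f' x v) \<in> sm S" by blast
  have m: "(\<lambda>x. inverse (f x)) \<in> sm S" by (rule sm.sm_inv) (use sm_ln.hyps in force)+
  then have m: "(\<lambda>x. 1 / f x) \<in> sm S" by (simp add: divide_inverse)
  show ?case by (rule sm_chain[OF f _ m]) (use sm_ln.hyps(2) in \<open>auto intro: DERIV_ln_divide\<close>)
next
  case (sm_arcsin f)
  then obtain f' where f: "\<forall>x\<in>S. (f has_derivative f' x) (at x)" "\<forall>v. (\<lambda>x. f' x v) \<in> sm S" by blast
  have pos: "x \<in> S \<Longrightarrow> 1 + (-1) * (f x * f x) > 0" for x
  proof -
    assume "x \<in> S"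
    then have "\<bar>f x\<bar> < 1" by (rule sm_arcsin.hyps(2))
    then have "\<bar>f x\<bar> * \<bar>f x\<bar> < 1 * 1" by (intro mult_strict_mono) auto
    then show ?thesis by (simp add: abs_mult[symmetric])
  qed
  have p: "(\<lambda>x. 1 + (-1) * (f x * f x)) \<in> sm S"
    by (rule sm.sm_add[OF sm.sm_const sm.sm_mul[OF sm.sm_const sm.sm_mul[OF sm_arcsin.hyps(1) sm_arcsin.hyps(1)]]])
  have q: "(\<lambda>x. sqrt (1 + (-1) * (f x * f x))) \<in> sm S" by (rule sm.sm_sqrt[OF p]) (use pos in auto)
  have m: "(\<lambda>x. inverse (sqrt (1 + (-1) * (f x * f x)))) \<in> sm S" by (rule sm.sm_inv[OF q]) (use pos in force)
  then have m: "(\<lambda>x. inverse (sqrt (1 - (f x)\<^sup>2))) \<in> sm S" by (simp add: power2_eq_square)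
  show ?case by (rule sm_chain[OF f _ m]) (use sm_arcsin.hyps(2) in \<open>auto intro: DERIV_arcsin simp: abs_less_iff\<close>)
next
  case (sm_cong f g)
  then obtain f' where f: "\<forall>x\<in>S. (f has_derivative f' x) (at x)" "\<forall>v. (\<lambda>x. f' x v) \<in> sm S" by blast
  have "\<forall>x\<in>S. (g has_derivative f' x) (at x)"
    using f sm_cong.hyps(2) S by (auto intro: has_derivative_transform_within_open)
  then show ?case using f by blast
qed

lemma sm_cont_diff:
  assumes S: "open S"
  shows "f \<in> sm S \<Longrightarrow> cont_diff k S f"
proof (induction k arbitrary: f)
  case 0
  obtain f' where f: "\<forall>x\<in>S. (f has_derivative f' x) (at x)" using sm_deriv[OF S 0] by blast
  then show ?case by (auto intro!: continuous_at_imp_continuous_on has_derivative_continuous)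
next
  case (Suc k)
  obtain f' where f: "\<forall>x\<in>S. (f has_derivative f' x) (at x)" "\<forall>v. (\<lambda>x. f' x v) \<in> sm S"
    using sm_deriv[OF S Suc.prems] by blast
  have "(\<lambda>x. frechet_derivative f (at x) v) \<in> sm S" for v
  proof (rule sm_cong[OF f(2)[rule_format, of v]])
    fix x assume x: "x \<in> S"
    have "f' x = frechet_derivative f (at x)" by (rule frechet_derivative_at) (use f(1) x in auto)
    then show "f' x v = frechet_derivative f (at x) v" by simp
  qed
  then show ?case using f(1) Suc.IH by (auto simp: differentiable_def)
qed

lemma cont_diff_cong:
  assumes S: "open S"
  shows "(\<And>x. x \<in> S \<Longrightarrow> f x = g x) \<Longrightarrow> cont_diff k S f = cont_diff k S g"
proof (induction k arbitrary: f g)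
  case 0
  then show ?case by (auto intro: continuous_on_cong)
next
  case (Suc k)
  have d: "x \<in> S \<Longrightarrow> f differentiable (at x) \<longleftrightarrow> g differentiable (at x)" for x
    unfolding differentiable_def using Suc.prems S
    by (metis has_derivative_transform_within_open)
  have fd: "x \<in> S \<Longrightarrow> f differentiable (at x) \<Longrightarrow> frechet_derivative f (at x) = frechet_derivative g (at x)" for x
  proof -
    assume x: "x \<in> S" "f differentiable (at x)"
    then have h: "(f has_derivative frechet_derivative f (at x)) (at x)" by (simp add: frechet_derivative_works)
    then have "(g has_derivative frechet_derivative f (at x)) (at x)"
      using Suc.prems S x by (auto intro: has_derivative_transform_within_open)
    then show ?thesis by (rule frechet_derivative_at)
  qed
  show ?case
  proof (cases "\<forall>x\<in>S. f differentiable (at x)")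
    case True
    have "cont_diff k S (\<lambda>x. frechet_derivative f (at x) v) = cont_diff k S (\<lambda>x. frechet_derivative g (at x) v)" for v
      by (rule Suc.IH) (use True fd in auto)
    then show ?thesis using True d by auto
  next
    case False
    then show ?thesis using d by auto
  qed
qed

lemma cont_diff_add:
  assumes S: "open S"
  shows "cont_diff k S f \<Longrightarrow> cont_diff k S g \<Longrightarrow> cont_diff k S (\<lambda>x. f x + g x)"
proof (induction k arbitrary: f g)
  case 0
  then show ?case by (auto intro: continuous_on_add)
next
  case (Suc k)
  have fd: "x \<in> S \<Longrightarrow> frechet_derivative (\<lambda>x. f x + g x) (at x) v = frechet_derivative f (at x) v + frechet_derivative g (at x) v" for x v
  proof -
    assume x: "x \<in> S"
    have "((\<lambda>x. f x + g x) has_derivative (\<lambda>v. frechet_derivative f (at x) v + frechet_derivative g (at x) v)) (at x)"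
      using Suc.prems x by (auto intro!: has_derivative_add simp: frechet_derivative_works[symmetric])
    then show ?thesis by (simp add: frechet_derivative_at[symmetric])
  qed
  have "cont_diff k S (\<lambda>x. frechet_derivative (\<lambda>x. f x + g x) (at x) v)" for v
    using cont_diff_cong[OF S, of "\<lambda>x. frechet_derivative (\<lambda>x. f x + g x) (at x) v"
        "\<lambda>x. frechet_derivative f (at x) v + frechet_derivative g (at x) v"] fd Suc by auto
  then show ?case using Suc.prems by auto
qed

lemma cont_diff_scaleR:
  fixes w :: "'b::real_normed_vector"
  assumes S: "open S"
  shows "cont_diff k S f \<Longrightarrow> cont_diff k S (\<lambda>x. f x *\<^sub>R w)"
proof (induction k arbitrary: f)
  case 0
  then show ?case by (auto intro: continuous_on_scaleR)
next
  case (Suc k)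
  have fd: "x \<in> S \<Longrightarrow> frechet_derivative (\<lambda>x. f x *\<^sub>R w) (at x) v = frechet_derivative f (at x) v *\<^sub>R w" for x v
  proof -
    assume x: "x \<in> S"
    have "((\<lambda>x. f x *\<^sub>R w) has_derivative (\<lambda>v. frechet_derivative f (at x) v *\<^sub>R w)) (at x)"
      using Suc.prems x by (auto intro!: derivative_eq_intros simp: frechet_derivative_works[symmetric])
    then show ?thesis by (simp add: frechet_derivative_at[symmetric])
  qed
  have "cont_diff k S (\<lambda>x. frechet_derivative (\<lambda>x. f x *\<^sub>R w) (at x) v)" for v
    using cont_diff_cong[OF S, of "\<lambda>x. frechet_derivative (\<lambda>x. f x *\<^sub>R w) (at x) v"
        "\<lambda>x. frechet_derivative f (at x) v *\<^sub>R w"] fd Suc by auto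
  moreover have "\<forall>x\<in>S. (\<lambda>x. f x *\<^sub>R w) differentiable (at x)" using Suc.prems by auto
  ultimately show ?case by auto
qed

lemma sm_uminus: assumes "f \<in> sm S" shows "(\<lambda>x. - f x) \<in> sm S"
  by (rule sm.sm_cong[OF sm.sm_mul[OF sm.sm_const[where c="-1"] assms]]) auto
lemma sm_diff: "f \<in> sm S \<Longrightarrow> g \<in> sm S \<Longrightarrow> (\<lambda>x. f x - g x) \<in> sm S"
  by (rule sm.sm_cong[OF sm.sm_add[OF _ sm_uminus]]) auto
lemma sm_divide: "f \<in> sm S \<Longrightarrow> g \<in> sm S \<Longrightarrow> (\<And>x. x \<in> S \<Longrightarrow> g x \<noteq> 0) \<Longrightarrow> (\<lambda>x. f x / g x) \<in> sm S"
  by (rule sm.sm_cong[OF sm.sm_mul[OF _ sm.sm_inv]]) (auto simp: divide_inverse)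

lemma sm_fst: "(\<lambda>p. fst p) \<in> sm S" by (rule sm.sm_lin) (rule bounded_linear_fst)
lemma sm_fst_snd: "(\<lambda>p. fst (snd p)) \<in> sm S"
  by (rule sm.sm_lin) (rule bounded_linear_compose[OF bounded_linear_fst bounded_linear_snd])
lemma sm_snd_snd: "(\<lambda>p. snd (snd p)) \<in> sm S"
  by (rule sm.sm_lin) (rule bounded_linear_compose[OF bounded_linear_snd bounded_linear_snd])
lemma sm_nth2: "(\<lambda>M::real^2^2. M $ i $ j) \<in> sm S"
  by (rule sm.sm_lin) (rule bounded_linear_compose[OF bounded_linear_vec_nth bounded_linear_vec_nth])

lemma smooth_sum4:
  assumes S: "open S"
    and f: "f1 \<in> sm S" "f2 \<in> sm S" "f3 \<in> sm S" "f4 \<in> sm S"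
  shows "smooth_on S (\<lambda>x. f1 x *\<^sub>R w1 + f2 x *\<^sub>R w2 + f3 x *\<^sub>R w3 + f4 x *\<^sub>R w4)"
  unfolding smooth_on_def
  by (intro allI cont_diff_add[OF S] cont_diff_scaleR[OF S] sm_cont_diff[OF S] f)

lemma smooth_sum3:
  assumes S: "open S"
    and f: "f1 \<in> sm S" "f2 \<in> sm S" "f3 \<in> sm S"
  shows "smooth_on S (\<lambda>x. f1 x *\<^sub>R w1 + f2 x *\<^sub>R w2 + f3 x *\<^sub>R w3)"
  unfolding smooth_on_def
  by (intro allI cont_diff_add[OF S] cont_diff_scaleR[OF S] sm_cont_diff[OF S] f)

lemma coord_map_sum: "coord_map = (\<lambda>p.
    (exp (fst p) * (cos (fst (snd p)) - snd (snd p) * sin (fst (snd p)))) *\<^sub>R mat2 1 0 0 0 +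
    (- exp (fst p) * sin (fst (snd p))) *\<^sub>R mat2 0 1 0 0 +
    (exp (- fst p) * (sin (fst (snd p)) + snd (snd p) * cos (fst (snd p)))) *\<^sub>R mat2 0 0 1 0 +
    (exp (- fst p) * cos (fst (snd p))) *\<^sub>R mat2 0 0 0 1)"
  by (rule ext, clarify) (simp add: coord_map_eq mat2_eq_iff)

lemma open_coord_dom: "open coord_dom"
  unfolding coord_dom_def by (intro open_Times) auto

lemma smooth_coord_map: "smooth_on coord_dom coord_map"
  unfolding coord_map_sum
  by (rule smooth_sum4[OF open_coord_dom])
     (intro sm.sm_mul sm.sm_exp sm_diff sm.sm_add sm.sm_sin sm.sm_cos sm_uminus sm_fst sm_fst_snd sm_snd_snd)+

definition U0 :: "(real^2^2) set" where "U0 = {M. M$2$2 > 0 \<and> \<bar>M$1$2 * M$2$2\<bar> < 1/2}"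

lemma open_U0: "open U0"
proof -
  have "open {M::real^2^2. 0 < M$2$2}"
    by (rule open_Collect_less) (auto intro!: continuous_intros)
  moreover have "open {M::real^2^2. \<bar>M$1$2 * M$2$2\<bar> < 1/2}"
    by (rule open_Collect_less) (auto intro!: continuous_intros)
  ultimately show ?thesis unfolding U0_def by (rule open_Collect_conj)
qed

lemma W_U0: "W_set \<subseteq> U0" by (auto simp: W_set_def U0_def)

lemma U0_cos: "M \<in> U0 \<Longrightarrow> cos (th M) > 0"
  using th_bound[of M] by (intro cos_gt_zero_pi) (auto simp: U0_def)
lemma U0_cos': "0 < M$2$2 \<Longrightarrow> \<bar>M$1$2 * M$2$2\<bar> * 2 < 1 \<Longrightarrow> cos (th M) > 0"
  using U0_cos[of M] by (auto simp: U0_def)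

lemma sm_th: "th \<in> sm U0"
proof -
  have "(\<lambda>M. - arcsin (2 * (M$1$2 * M$2$2)) / 2) \<in> sm U0"
    by (intro sm_divide sm_uminus sm.sm_arcsin sm.sm_mul sm.sm_const sm_nth2) (auto simp: U0_def)
  then show ?thesis by (simp add: th_def[abs_def])
qed

lemma Psi_sum: "Psi = (\<lambda>M. ln (cos (th M) / M$2$2) *\<^sub>R (1,0,0) + th M *\<^sub>R (0,1,0) +
     (M$2$1 / M$2$2 - sin (th M) / cos (th M)) *\<^sub>R (0,0,1))"
  by (rule ext) (simp add: Psi_def tan_def)

lemma smooth_Psi: "smooth_on U0 Psi"
  unfolding Psi_sum
proof (rule smooth_sum3[OF open_U0])
  show "th \<in> sm U0" by (rule sm_th)
  show "(\<lambda>M. ln (cos (th M) / M$2$2)) \<in> sm U0"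
    by (intro sm.sm_ln sm_divide sm.sm_cos sm_th sm_nth2) (auto simp: U0_def U0_cos')
  show "(\<lambda>M. M$2$1 / M$2$2 - sin (th M) / cos (th M)) \<in> sm U0"
    by (intro sm_diff sm_divide sm.sm_cos sm.sm_sin sm_th sm_nth2) (auto simp: U0_def dest: U0_cos')
qed

type_synonym R4 = "(real \<times> real) \<times> (real \<times> real)"

definition "e11 = mat2 1 0 0 0"
definition "e12 = mat2 0 1 0 0"
definition "e21 = mat2 0 0 1 0"
definition "e22 = mat2 0 0 0 1"
lemma mat2_sum: "mat2 a b c d = a *\<^sub>R e11 + b *\<^sub>R e12 + c *\<^sub>R e21 + d *\<^sub>R e22"
  by (simp add: mat2_eq_iff e11_def e12_def e21_def e22_def)

lemma fst_measurable_borel[measurable]: "(fst :: ('a::topological_space \<times> 'b::topological_space) \<Rightarrow> 'a) \<in> borel_measurable borel"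
  by (intro borel_measurable_continuous_onI continuous_on_fst continuous_on_id)
lemma snd_measurable_borel[measurable]: "(snd :: ('a::topological_space \<times> 'b::topological_space) \<Rightarrow> 'b) \<in> borel_measurable borel"
  by (intro borel_measurable_continuous_onI continuous_on_snd continuous_on_id)

lemma borel_measurable_mat2[measurable]:
  assumes [measurable]: "f1 \<in> borel_measurable M" "f2 \<in> borel_measurable M" "f3 \<in> borel_measurable M" "f4 \<in> borel_measurable M"
  shows "(\<lambda>x. mat2 (f1 x) (f2 x) (f3 x) (f4 x)) \<in> borel_measurable M"
  unfolding mat2_sum by measurable

lemma borel_measurable_nth2[measurable]: "(\<lambda>M::real^2^2. M $ i $ j) \<in> borel_measurable borel"
  by (intro borel_measurable_continuous_onI continuous_intros)

definition detq :: "R4 \<Rightarrow> real" where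
  "detq x = fst (fst x) * snd (snd x) - snd (fst x) * fst (snd x)"

definition Fm :: "R4 \<Rightarrow> real^2^2" where
  "Fm x = mat2 (fst (fst x) / sqrt (detq x)) (snd (fst x) / sqrt (detq x))
              (fst (snd x) / sqrt (detq x)) (snd (snd x) / sqrt (detq x))"

definition Pset :: "R4 set" where "Pset = {x. 0 < detq x \<and> detq x \<le> 1}"

definition rho :: "R4 \<Rightarrow> ennreal" where "rho x = 2 * indicator Pset x"

definition mu :: "(real^2^2) measure" where "mu = distr (density lborel rho) borel Fm"

lemma detq_measurable[measurable]: "detq \<in> borel_measurable borel"
  unfolding detq_def[abs_def] by measurable

lemma Fm_measurable[measurable]: "Fm \<in> borel_measurable borel"
  unfolding Fm_def[abs_def] by measurable

lemma Pset_measurable[measurable]: "Pset \<in> sets borel"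
  unfolding Pset_def by measurable

lemma rho_measurable[measurable]: "rho \<in> borel_measurable borel"
  unfolding rho_def[abs_def] by measurable

lemma sets_mu: "sets mu = sets borel" by (simp add: mu_def)

lemma emeasure_mu: assumes [measurable]: "A \<in> sets borel"
  shows "emeasure mu A = (\<integral>\<^sup>+x. rho x * indicator A (Fm x) \<partial>lborel)"
proof -
  have "emeasure mu A = emeasure (density lborel rho) (Fm -` A)"
    unfolding mu_def by (subst emeasure_distr) auto
  also have "\<dots> = (\<integral>\<^sup>+x. rho x * indicator (Fm -` A) x \<partial>lborel)"
    by (subst emeasure_density) (use measurable_sets_borel[OF Fm_measurable assms] in auto)
  finally show ?thesis by (simp add: indicator_def)
qed

lemma nn_integral_translate:
  fixes c :: "'a::euclidean_space"
  assumes [measurable]: "f \<in> borel_measurable borel"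
  shows "(\<integral>\<^sup>+x. f (c + x) \<partial>lborel) = (\<integral>\<^sup>+x. f x \<partial>lborel)"
proof -
  have "(\<integral>\<^sup>+x. f x \<partial>lborel) = (\<integral>\<^sup>+x. f x \<partial>distr lborel borel ((+) c))"
    by (simp add: lborel_distr_plus)
  also have "\<dots> = (\<integral>\<^sup>+x. f (c + x) \<partial>lborel)"
    by (subst nn_integral_distr) auto
  finally show ?thesis ..
qed

lemma nn_integral_scale:
  fixes c :: real
  assumes [measurable]: "f \<in> borel_measurable (borel :: 'a::euclidean_space measure)" and c: "c \<noteq> 0"
  shows "(\<integral>\<^sup>+x. f x \<partial>lborel) = ennreal (\<bar>c\<bar> ^ DIM('a)) * (\<integral>\<^sup>+x. f (c *\<^sub>R x) \<partial>lborel)"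
proof -
  have "(\<integral>\<^sup>+x. f x \<partial>lborel) =
      (\<integral>\<^sup>+x. f x \<partial>density (distr lborel borel (\<lambda>x. 0 + c *\<^sub>R x)) (\<lambda>_. ennreal (\<bar>c\<bar> ^ DIM('a))))"
    by (rule arg_cong[where f="\<lambda>M. integral\<^sup>N M f", OF lborel_affine[OF c]])
  also have "\<dots> = (\<integral>\<^sup>+x. ennreal (\<bar>c\<bar> ^ DIM('a)) * f x \<partial>distr lborel borel (\<lambda>x. 0 + c *\<^sub>R x))"
    by (subst nn_integral_density) auto
  also have "\<dots> = (\<integral>\<^sup>+x. ennreal (\<bar>c\<bar> ^ DIM('a)) * f (c *\<^sub>R x) \<partial>lborel)"
    by (subst nn_integral_distr) auto
  also have "\<dots> = ennreal (\<bar>c\<bar> ^ DIM('a)) * (\<integral>\<^sup>+x. f (c *\<^sub>R x) \<partial>lborel)"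
    by (rule nn_integral_cmult) measurable
  finally show ?thesis .
qed

definition pres :: "(R4 \<Rightarrow> R4) \<Rightarrow> bool" where
  "pres L \<longleftrightarrow> L \<in> borel_measurable borel \<and>
     (\<forall>f \<in> borel_measurable borel. (\<integral>\<^sup>+x. f (L x) \<partial>lborel) = (\<integral>\<^sup>+x. f x \<partial>lborel))"

lemma pres_comp: assumes "pres L1" "pres L2" shows "pres (\<lambda>x. L1 (L2 x))"
proof -
  have m1[measurable]: "L1 \<in> borel_measurable borel" and m2[measurable]: "L2 \<in> borel_measurable borel"
    using assms by (auto simp: pres_def)
  show ?thesis unfolding pres_def
  proof (intro conjI ballI)
    show "(\<lambda>x. L1 (L2 x)) \<in> borel_measurable borel" by measurable
    fix f :: "R4 \<Rightarrow> ennreal" assume [measurable]: "f \<in> borel_measurable borel"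
    have "(\<integral>\<^sup>+x. f (L1 (L2 x)) \<partial>lborel) = (\<integral>\<^sup>+x. f (L1 x) \<partial>lborel)"
      using assms(2) unfolding pres_def by (auto dest: bspec[of _ _ "\<lambda>x. f (L1 x)"])
    also have "\<dots> = (\<integral>\<^sup>+x. f x \<partial>lborel)"
      using assms(1) unfolding pres_def by auto
    finally show "(\<integral>\<^sup>+x. f (L1 (L2 x)) \<partial>lborel) = (\<integral>\<^sup>+x. f x \<partial>lborel)" .
  qed
qed

lemma int_R4: assumes [measurable]: "f \<in> borel_measurable (borel :: R4 measure)"
  shows "(\<integral>\<^sup>+x. f x \<partial>lborel) = (\<integral>\<^sup>+x1. \<integral>\<^sup>+x2. f (x1, x2) \<partial>lborel \<partial>lborel)"
    "(\<integral>\<^sup>+x. f x \<partial>lborel) = (\<integral>\<^sup>+x2. \<integral>\<^sup>+x1. f (x1, x2) \<partial>lborel \<partial>lborel)"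
proof -
  have m: "f \<in> borel_measurable (lborel \<Otimes>\<^sub>M lborel)" by (simp add: lborel_prod)
  show "(\<integral>\<^sup>+x. f x \<partial>lborel) = (\<integral>\<^sup>+x1. \<integral>\<^sup>+x2. f (x1, x2) \<partial>lborel \<partial>lborel)"
    using lborel.nn_integral_fst[OF m] by (simp add: lborel_prod)
  show "(\<integral>\<^sup>+x. f x \<partial>lborel) = (\<integral>\<^sup>+x2. \<integral>\<^sup>+x1. f (x1, x2) \<partial>lborel \<partial>lborel)"
    using lborel_pair.nn_integral_snd[OF m] by (simp add: lborel_prod)
qed

lemma pres_lower: "pres (\<lambda>x. (fst x, snd x + r *\<^sub>R fst x))"
  unfolding pres_def
proof (intro conjI ballI)
  show "(\<lambda>x. (fst x, snd x + r *\<^sub>R fst x)) \<in> borel_measurable (borel :: R4 measure)" by measurable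
  fix f :: "R4 \<Rightarrow> ennreal" assume [measurable]: "f \<in> borel_measurable borel"
  have "(\<integral>\<^sup>+x. f (fst x, snd x + r *\<^sub>R fst x) \<partial>lborel) =
      (\<integral>\<^sup>+x1. \<integral>\<^sup>+x2. f (x1, x2 + r *\<^sub>R x1) \<partial>lborel \<partial>lborel)"
    by (subst int_R4(1)) auto
  also have "\<dots> = (\<integral>\<^sup>+x1. \<integral>\<^sup>+x2. f (x1, x2) \<partial>lborel \<partial>lborel)"
  proof (rule nn_integral_cong)
    fix x1 :: "real \<times> real"
    show "(\<integral>\<^sup>+x2. f (x1, x2 + r *\<^sub>R x1) \<partial>lborel) = (\<integral>\<^sup>+x2. f (x1, x2) \<partial>lborel)"
      using nn_integral_translate[of "\<lambda>x2. f (x1, x2)" "r *\<^sub>R x1"] by (simp add: add.commute)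
  qed
  also have "\<dots> = (\<integral>\<^sup>+x. f x \<partial>lborel)" by (subst int_R4(1)) auto
  finally show "(\<integral>\<^sup>+x. f (fst x, snd x + r *\<^sub>R fst x) \<partial>lborel) = (\<integral>\<^sup>+x. f x \<partial>lborel)" .
qed

lemma pres_upper: "pres (\<lambda>x. (fst x + r *\<^sub>R snd x, snd x))"
  unfolding pres_def
proof (intro conjI ballI)
  show "(\<lambda>x. (fst x + r *\<^sub>R snd x, snd x)) \<in> borel_measurable (borel :: R4 measure)" by measurable
  fix f :: "R4 \<Rightarrow> ennreal" assume [measurable]: "f \<in> borel_measurable borel"
  have "(\<integral>\<^sup>+x. f (fst x + r *\<^sub>R snd x, snd x) \<partial>lborel) =
      (\<integral>\<^sup>+x2. \<integral>\<^sup>+x1. f (x1 + r *\<^sub>R x2, x2) \<partial>lborel \<partial>lborel)"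
    by (subst int_R4(2)) auto
  also have "\<dots> = (\<integral>\<^sup>+x2. \<integral>\<^sup>+x1. f (x1, x2) \<partial>lborel \<partial>lborel)"
  proof (rule nn_integral_cong)
    fix x2 :: "real \<times> real"
    show "(\<integral>\<^sup>+x1. f (x1 + r *\<^sub>R x2, x2) \<partial>lborel) = (\<integral>\<^sup>+x1. f (x1, x2) \<partial>lborel)"
      using nn_integral_translate[of "\<lambda>x1. f (x1, x2)" "r *\<^sub>R x2"] by (simp add: add.commute)
  qed
  also have "\<dots> = (\<integral>\<^sup>+x. f x \<partial>lborel)" by (subst int_R4(2)) auto
  finally show "(\<integral>\<^sup>+x. f (fst x + r *\<^sub>R snd x, snd x) \<partial>lborel) = (\<integral>\<^sup>+x. f x \<partial>lborel)" .
qed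

lemma pres_diag: assumes l: "l \<noteq> 0" shows "pres (\<lambda>x. (l *\<^sub>R fst x, (1/l) *\<^sub>R snd x))"
  unfolding pres_def
proof (intro conjI ballI)
  show "(\<lambda>x. (l *\<^sub>R fst x, (1/l) *\<^sub>R snd x)) \<in> borel_measurable (borel :: R4 measure)" by measurable
  fix f :: "R4 \<Rightarrow> ennreal" assume [measurable]: "f \<in> borel_measurable borel"
  define n where "n = DIM(real\<times>real)"
  define K where "K = ennreal (\<bar>l\<bar> ^ n)"
  define K' where "K' = ennreal (\<bar>1/l\<bar> ^ n)"
  have l1: "\<bar>l\<bar> * \<bar>1/l\<bar> = 1" using l by (simp add: abs_mult[symmetric])
  have "\<bar>l\<bar> ^ n * \<bar>1/l\<bar> ^ n = 1" using l1 by (metis power_mult_distrib power_one)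
  then have l2: "K * K' = 1" unfolding K_def K'_def
    by (simp add: ennreal_mult'[symmetric])
  have l3: "K' * K = 1" using l2 by (simp add: mult.commute)
  have "(\<integral>\<^sup>+x. f (l *\<^sub>R fst x, (1/l) *\<^sub>R snd x) \<partial>lborel) =
      (\<integral>\<^sup>+x1. \<integral>\<^sup>+x2. f (l *\<^sub>R x1, (1/l) *\<^sub>R x2) \<partial>lborel \<partial>lborel)"
    by (subst int_R4(1)) auto
  also have "\<dots> = (\<integral>\<^sup>+x1. K * \<integral>\<^sup>+x2. f (l *\<^sub>R x1, x2) \<partial>lborel \<partial>lborel)"
  proof (rule nn_integral_cong)
    fix x1 :: "real \<times> real"
    have h: "(\<integral>\<^sup>+x2. f (l *\<^sub>R x1, x2) \<partial>lborel) = K' * (\<integral>\<^sup>+x2. f (l *\<^sub>R x1, (1/l) *\<^sub>R x2) \<partial>lborel)"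
      unfolding K'_def n_def by (rule nn_integral_scale) (use l in auto)
    show "(\<integral>\<^sup>+x2. f (l *\<^sub>R x1, (1/l) *\<^sub>R x2) \<partial>lborel) = K * \<integral>\<^sup>+x2. f (l *\<^sub>R x1, x2) \<partial>lborel"
      by (simp only: h mult.assoc[symmetric] l2 mult_1)
  qed
  also have "\<dots> = K * (\<integral>\<^sup>+x1. \<integral>\<^sup>+x2. f (l *\<^sub>R x1, x2) \<partial>lborel \<partial>lborel)"
    by (rule nn_integral_cmult) measurable
  also have "(\<integral>\<^sup>+x1. \<integral>\<^sup>+x2. f (l *\<^sub>R x1, x2) \<partial>lborel \<partial>lborel) = K' * (\<integral>\<^sup>+x1. \<integral>\<^sup>+x2. f (x1, x2) \<partial>lborel \<partial>lborel)"
  proof -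
    have h: "(\<integral>\<^sup>+x1. \<integral>\<^sup>+x2. f (x1, x2) \<partial>lborel \<partial>lborel) = K * (\<integral>\<^sup>+x1. \<integral>\<^sup>+x2. f (l *\<^sub>R x1, x2) \<partial>lborel \<partial>lborel)"
      unfolding K_def n_def by (rule nn_integral_scale[OF _ l]) measurable
    show ?thesis by (simp only: h mult.assoc[symmetric] l3 mult_1)
  qed
  also have "(\<integral>\<^sup>+x1. \<integral>\<^sup>+x2. f (x1, x2) \<partial>lborel \<partial>lborel) = (\<integral>\<^sup>+x. f x \<partial>lborel)" by (subst int_R4(1)) auto
  finally show "(\<integral>\<^sup>+x. f (l *\<^sub>R fst x, (1/l) *\<^sub>R snd x) \<partial>lborel) = (\<integral>\<^sup>+x. f x \<partial>lborel)"
    by (simp only: mult.assoc[symmetric] l2 mult_1)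
qed

definition Lg :: "real^2^2 \<Rightarrow> R4 \<Rightarrow> R4" where
  "Lg g x = ((g$1$1 * fst (fst x) + g$1$2 * fst (snd x), g$1$1 * snd (fst x) + g$1$2 * snd (snd x)),
             (g$2$1 * fst (fst x) + g$2$2 * fst (snd x), g$2$1 * snd (fst x) + g$2$2 * snd (snd x)))"

lemma Lg_mult: "Lg (g ** h) x = Lg g (Lg h x)"
proof -
  have "g ** h = mat2 (g$1$1) (g$1$2) (g$2$1) (g$2$2) ** mat2 (h$1$1) (h$1$2) (h$2$1) (h$2$2)"
    by (metis mat2_of)
  then show ?thesis by (simp add: Lg_def mat2_mult algebra_simps)
qed

lemma Lg_lower: "Lg (mat2 1 0 r 1) = (\<lambda>x. (fst x, snd x + r *\<^sub>R fst x))"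
  by (rule ext) (simp add: Lg_def algebra_simps prod_eq_iff)
lemma Lg_upper: "Lg (mat2 1 q 0 1) = (\<lambda>x. (fst x + q *\<^sub>R snd x, snd x))"
  by (rule ext) (simp add: Lg_def algebra_simps prod_eq_iff)
lemma Lg_diag: "Lg (mat2 l 0 0 (1/l)) = (\<lambda>x. (l *\<^sub>R fst x, (1/l) *\<^sub>R snd x))"
  by (rule ext) (simp add: Lg_def algebra_simps prod_eq_iff)

lemma pres_Lg_nz: assumes "det (mat2 p q r s) = 1" "p \<noteq> 0" shows "pres (Lg (mat2 p q r s))"
proof -
  have d: "p * s - q * r = 1" using assms(1) by (simp add: det_mat2)
  have p: "p \<noteq> 0" by (rule assms(2))
  have s: "s = (r*q+1)/p" using d p by (simp add: field_simps)
  have e: "mat2 1 0 (r/p) 1 ** (mat2 p 0 0 (1/p) ** mat2 1 (q/p) 0 1) = mat2 p q r ((r*q+1)/p)"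
    using p by (simp add: mat2_mult add_divide_distrib)
  have "Lg (mat2 p q r s) = (\<lambda>x. Lg (mat2 1 0 (r/p) 1) (Lg (mat2 p 0 0 (1/p)) (Lg (mat2 1 (q/p) 0 1) x)))"
    unfolding s e[symmetric] by (simp add: Lg_mult[abs_def])
  then show ?thesis
    unfolding Lg_lower Lg_upper Lg_diag
    by (simp only:) (rule pres_comp[OF pres_lower pres_comp[OF pres_diag[OF p] pres_upper]])
qed

lemma pres_Lg: assumes "det g = 1" shows "pres (Lg g)"
proof -
  obtain p q r s where g: "g = mat2 p q r s" by (metis mat2_of)
  have d: "p * s - q * r = 1" using assms g by (simp add: det_mat2)
  show ?thesis
  proof (cases "p = 0")
    case False
    have "det (mat2 p q r s) = 1" using assms g by simp
    then show ?thesis using pres_Lg_nz[of p q r s] False g by simp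
  next
    case True
    then have r: "r \<noteq> 0" using d by auto
    have e: "mat2 1 (-1) 0 1 ** mat2 r (q + s) r s = mat2 p q r s"
      using True by (simp add: mat2_mult)
    have "det (mat2 r (q + s) r s) = 1" using d True by (simp add: det_mat2 algebra_simps)
    then have "pres (Lg (mat2 r (q + s) r s))" using r by (rule pres_Lg_nz)
    then have "pres (\<lambda>x. Lg (mat2 1 (-1) 0 1) (Lg (mat2 r (q + s) r s) x))" unfolding Lg_upper by (rule pres_comp[OF pres_upper])
    then show ?thesis unfolding g e[symmetric] Lg_mult[abs_def] .
  qed
qed

lemma detq_Lg: "detq (Lg g x) = det g * detq x"
  by (simp add: detq_def Lg_def det_2 algebra_simps)

lemma Fm_Lg: assumes "det g = 1" shows "Fm (Lg g x) = g ** Fm x"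
proof -
  have "g ** Fm x = mat2 (g$1$1) (g$1$2) (g$2$1) (g$2$2) ** Fm x" by (metis mat2_of)
  moreover have dq: "detq (Lg g x) = detq x" using assms detq_Lg by simp
  have "Fm (Lg g x) = mat2 (fst (fst (Lg g x)) / sqrt (detq x)) (snd (fst (Lg g x)) / sqrt (detq x))
              (fst (snd (Lg g x)) / sqrt (detq x)) (snd (snd (Lg g x)) / sqrt (detq x))"
    by (simp only: Fm_def dq)
  ultimately show ?thesis by (simp add: Fm_def Lg_def mat2_mult add_divide_distrib)
qed

lemma rho_Lg: assumes "det g = 1" shows "rho (Lg g x) = rho x"
  using assms by (simp add: rho_def Pset_def detq_Lg indicator_def)

lemma mult_measurable[measurable]: "(\<lambda>M::real^2^2. (h::real^2^2) ** M) \<in> borel_measurable borel"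
proof -
  have "(\<lambda>M::real^2^2. h ** M) = (\<lambda>M. mat2 (h$1$1) (h$1$2) (h$2$1) (h$2$2) ** mat2 (M$1$1) (M$1$2) (M$2$1) (M$2$2))"
    by (metis mat2_of)
  also have "\<dots> = (\<lambda>M. mat2 (h$1$1 * M$1$1 + h$1$2 * M$2$1) (h$1$1 * M$1$2 + h$1$2 * M$2$2)
                           (h$2$1 * M$1$1 + h$2$2 * M$2$1) (h$2$1 * M$1$2 + h$2$2 * M$2$2))"
    by (simp add: mat2_mult)
  finally show ?thesis by simp
qed

definition ginv :: "real^2^2 \<Rightarrow> real^2^2" where "ginv g = mat2 (g$2$2) (- g$1$2) (- g$2$1) (g$1$1)"

lemma inv_aux: "p * s - q * r = (1::real) \<Longrightarrow> mat2 s (-q) (-r) p ** (mat2 p q r s ** mat2 a b c d) = mat2 a b c d"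
  unfolding mat2_mult mat2_eq_iff mat2_nth by (intro conjI; algebra)
lemma inv_aux2: "p * s - q * r = (1::real) \<Longrightarrow> mat2 p q r s ** (mat2 s (-q) (-r) p ** mat2 a b c d) = mat2 a b c d"
  unfolding mat2_mult mat2_eq_iff mat2_nth by (intro conjI; algebra)

lemma ginv_left: fixes g M :: "real^2^2" shows "det g = 1 \<Longrightarrow> ginv g ** (g ** M) = M"
  unfolding ginv_def det_2 by (subst (2) mat2_of[of g], subst (1 2) mat2_of[of M]) (rule inv_aux)
lemma ginv_right: fixes g M :: "real^2^2" shows "det g = 1 \<Longrightarrow> g ** (ginv g ** M) = M"
  unfolding ginv_def det_2 by (subst (1) mat2_of[of g], subst (1 2) mat2_of[of M]) (rule inv_aux2)
lemma det_ginv: "det (ginv g) = det g" by (simp add: ginv_def det_2 algebra_simps)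

lemma mu_invariant:
  assumes g: "g \<in> SL2" and A[measurable]: "A \<in> sets borel"
  shows "emeasure mu ((\<lambda>x. g ** x) ` A) = emeasure mu A"
proof -
  have dg: "det g = 1" using g by (simp add: SL2_def)
  let ?h = "ginv g"
  have dh: "det ?h = 1" using dg det_ginv by simp
  have img: "(\<lambda>x. g ** x) ` A = (\<lambda>M. ?h ** M) -` A"
  proof
    show "(\<lambda>x. g ** x) ` A \<subseteq> (\<lambda>M. ?h ** M) -` A" using ginv_left[OF dg] by auto
    show "(\<lambda>M. ?h ** M) -` A \<subseteq> (\<lambda>x. g ** x) ` A"
    proof
      fix M assume "M \<in> (\<lambda>M. ?h ** M) -` A"
      then have "?h ** M \<in> A" by simp
      moreover have "M = g ** (?h ** M)" using ginv_right[OF dg] by simp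
      ultimately show "M \<in> (\<lambda>x. g ** x) ` A" by blast
    qed
  qed
  have [measurable]: "(\<lambda>M. ?h ** M) -` A \<in> sets borel"
    using measurable_sets_borel[OF mult_measurable A] by simp
  have "emeasure mu ((\<lambda>x. g ** x) ` A) = (\<integral>\<^sup>+x. rho x * indicator ((\<lambda>M. ?h ** M) -` A) (Fm x) \<partial>lborel)"
    unfolding img by (rule emeasure_mu) measurable
  also have "\<dots> = (\<integral>\<^sup>+x. (\<lambda>y. rho y * indicator A (Fm y)) (Lg ?h x) \<partial>lborel)"
    by (rule nn_integral_cong) (simp add: rho_Lg[OF dh] Fm_Lg[OF dh] indicator_def)
  also have "\<dots> = (\<integral>\<^sup>+x. rho x * indicator A (Fm x) \<partial>lborel)"
    using pres_Lg[OF dh] unfolding pres_def by (auto dest!: bspec[of _ _ "\<lambda>y. rho y * indicator A (Fm y)"])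
  also have "\<dots> = emeasure mu A" by (rule emeasure_mu[symmetric]) measurable
  finally show ?thesis .
qed

lemma SL2_eq: "SL2 = {M. M$1$1 * M$2$2 - M$1$2 * M$2$1 = 1}"
  by (simp add: SL2_def det_2)

lemma SL2_measurable[measurable]: "SL2 \<in> sets borel"
  unfolding SL2_eq by measurable

lemma det_Fm: "0 < detq x \<Longrightarrow> det (Fm x) = 1"
proof -
  assume p: "0 < detq x"
  let ?s = "sqrt (detq x)"
  have s: "?s * ?s = detq x" using p by simp
  have "det (Fm x) = (fst (fst x) * snd (snd x) - snd (fst x) * fst (snd x)) / (?s * ?s)"
    by (simp add: Fm_def det_mat2 diff_divide_distrib)
  also have "\<dots> = 1" using s p by (simp add: detq_def)
  finally show ?thesis .
qed

lemma rho_nz: "rho x \<noteq> 0 \<Longrightarrow> 0 < detq x \<and> detq x \<le> 1"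
  by (auto simp: rho_def Pset_def indicator_def split: if_splits)

lemma mu_null: "emeasure mu (UNIV - SL2) = 0"
proof -
  have "emeasure mu (UNIV - SL2) = (\<integral>\<^sup>+x. rho x * indicator (UNIV - SL2) (Fm x) \<partial>lborel)"
    by (rule emeasure_mu) measurable
  also have "\<dots> = integral\<^sup>N lborel (\<lambda>x::R4. 0)"
  proof (rule nn_integral_cong)
    fix x
    show "rho x * indicator (UNIV - SL2) (Fm x) = 0"
    proof (cases "rho x = 0")
      case False
      then have "det (Fm x) = 1" using rho_nz det_Fm by blast
      then show ?thesis by (simp add: SL2_def)
    qed simp
  qed
  finally show ?thesis by simp
qed

lemma abs_entry_le: "\<bar>(M::real^2^2) $ i $ j\<bar> \<le> norm M"
proof -
  have "\<bar>M$i$j\<bar> \<le> norm (M$i)" by (rule component_le_norm_cart)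
  also have "\<dots> \<le> norm M" by (rule Finite_Cartesian_Product.norm_nth_le)
  finally show ?thesis .
qed

lemma mu_compact: assumes "compact K" shows "emeasure mu K < \<infinity>"
proof -
  have [measurable]: "K \<in> sets borel" using assms by (simp add: compact_imp_closed borel_closed)
  obtain B where B: "\<And>M. M \<in> K \<Longrightarrow> norm M \<le> B"
    using compact_imp_bounded[OF assms] unfolding bounded_iff by blast
  let ?C = "cbox ((-B, -B), (-B, -B)) ((B, B), (B, B)) :: R4 set"
  have le: "rho x * indicator K (Fm x) \<le> 2 * indicator ?C x" for x
  proof (cases "rho x \<noteq> 0 \<and> Fm x \<in> K")
    case True
    then have d: "0 < detq x" "detq x \<le> 1" using rho_nz by auto
    let ?s = "sqrt (detq x)"
    have s: "0 < ?s" "?s \<le> 1" using d by auto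
    have nb: "norm (Fm x) \<le> B" using True B by auto
    have cmp: "\<bar>Fm x $ i $ j\<bar> \<le> B" for i j
      using abs_entry_le[of "Fm x" i j] nb by linarith
    have bnd: "\<bar>y\<bar> \<le> B" if "\<bar>y / ?s\<bar> \<le> B" for y
    proof -
      have "\<bar>y\<bar> = \<bar>y / ?s\<bar> * ?s" using s by (simp add: abs_mult)
      also have "\<dots> \<le> \<bar>y / ?s\<bar> * 1" using s by (intro mult_left_mono) auto
      finally show ?thesis using that by simp
    qed
    have "\<bar>fst (fst x)\<bar> \<le> B" "\<bar>snd (fst x)\<bar> \<le> B" "\<bar>fst (snd x)\<bar> \<le> B" "\<bar>snd (snd x)\<bar> \<le> B"
      using bnd cmp[where i=1 and j=1] cmp[where i=1 and j=2] cmp[where i=2 and j=1] cmp[where i=2 and j=2] by (auto simp: Fm_def)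
    then have "x \<in> ?C" by (cases x) (auto simp: cbox_Pair_eq abs_le_iff)
    then show ?thesis using True by (auto simp: rho_def indicator_def)
  next
    case False
    then show ?thesis by auto
  qed
  have "emeasure mu K = (\<integral>\<^sup>+x. rho x * indicator K (Fm x) \<partial>lborel)" by (rule emeasure_mu) measurable
  also have "\<dots> \<le> (\<integral>\<^sup>+x. 2 * indicator ?C x \<partial>lborel)" by (rule nn_integral_mono) (rule le)
  also have "\<dots> = 2 * emeasure lborel ?C" by (rule nn_integral_cmult_indicator) simp
  also have "\<dots> < \<infinity>" using emeasure_lborel_cbox_finite[of "((-B,-B),(-B,-B))" "((B,B),(B,B))"]
    by (simp add: ennreal_mult_less_top)
  finally show ?thesis .
qed

lemma Fm_cont: "continuous_on {x. 0 < detq x} Fm"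
  unfolding Fm_def detq_def mat2_sum
  by (intro continuous_intros) auto

lemma mu_pos: assumes "openin (top_of_set SL2) U" "U \<noteq> {}" shows "emeasure mu U > 0"
proof -
  obtain Ob where O: "open Ob" "U = SL2 \<inter> Ob" using assms(1) by (auto simp: openin_open)
  obtain M0 where M0: "M0 \<in> U" using assms(2) by blast
  have [measurable]: "U \<in> sets borel" using O by (simp add: borel_open)
  define D where "D = {x. 1/4 < detq x \<and> detq x < 1}"
  have oD: "open D" unfolding D_def detq_def
    by (intro open_Collect_conj open_Collect_less continuous_intros)
  have cD: "continuous_on D Fm" by (rule continuous_on_subset[OF Fm_cont]) (auto simp: D_def)
  define V where "V = Fm -` Ob \<inter> D"
  have oV: "open V" unfolding V_def using cD oD O(1) continuous_on_open_vimage by blast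
  define c where "c = sqrt (1/2)"
  have c: "c > 0" "c * c = 1/2" by (auto simp: c_def)
  define x0 :: R4 where "x0 = ((c * M0$1$1, c * M0$1$2), (c * M0$2$1, c * M0$2$2))"
  have dM0: "M0$1$1 * M0$2$2 - M0$1$2 * M0$2$1 = 1" using M0 O by (auto simp: SL2_eq)
  have dx0: "detq x0 = 1/2"
  proof -
    have "detq x0 = (c * c) * (M0$1$1 * M0$2$2 - M0$1$2 * M0$2$1)" by (simp add: detq_def x0_def algebra_simps)
    then show ?thesis using dM0 c by simp
  qed
  have "sqrt (detq x0) = c" using dx0 by (simp add: c_def)
  then have "Fm x0 = M0" using c by (simp add: Fm_def x0_def mat2_eq_iff)
  then have x0V: "x0 \<in> V" using M0 O dx0 by (auto simp: V_def D_def)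
  obtain a b where ab: "box a b \<subseteq> V" "x0 \<in> box a b" "\<forall>i\<in>Basis. a \<bullet> i < b \<bullet> i"
    using open_contains_box[OF oV x0V] by blast
  have "0 < emeasure lborel (box a b)"
    using ab(3) by (auto simp: emeasure_lborel_box_eq intro!: prod_pos simp: algebra_simps)
  also have "\<dots> \<le> emeasure lborel V" by (rule emeasure_mono[OF ab(1)]) (simp add: borel_open oV)
  finally have pV: "0 < emeasure lborel V" .
  have le: "2 * indicator V x \<le> rho x * indicator U (Fm x)" for x
  proof (cases "x \<in> V")
    case True
    then have "1/4 < detq x" "detq x < 1" "Fm x \<in> Ob" by (auto simp: V_def D_def)
    moreover have "det (Fm x) = 1" using det_Fm \<open>1/4 < detq x\<close> by simp
    ultimately show ?thesis using O by (auto simp: rho_def Pset_def SL2_def indicator_def)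
  qed simp
  have "0 < 2 * emeasure lborel V" using pV by (simp add: ennreal_zero_less_mult_iff)
  also have "\<dots> = (\<integral>\<^sup>+x. 2 * indicator V x \<partial>lborel)"
    by (rule nn_integral_cmult_indicator[symmetric]) (simp add: borel_open oV)
  also have "\<dots> \<le> (\<integral>\<^sup>+x. rho x * indicator U (Fm x) \<partial>lborel)" by (rule nn_integral_mono) (rule le)
  also have "\<dots> = emeasure mu U" by (rule emeasure_mu[symmetric]) measurable
  finally show ?thesis .
qed

lemma haar_mu: "haar_SL2 mu"
  unfolding haar_SL2_def using sets_mu mu_null mu_invariant mu_compact mu_pos by auto

lemma SUP_ind: assumes "incseq S" shows "(SUP n. indicator (S n) x :: ennreal) = indicator (\<Union>n. S n) x"
proof (cases "x \<in> (\<Union>n. S n)")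
  case True
  then obtain n where n: "x \<in> S n" by blast
  have "(SUP n. indicator (S n) x :: ennreal) = 1"
  proof (rule antisym)
    show "(SUP n. indicator (S n) x :: ennreal) \<le> 1" by (rule SUP_least) (simp add: indicator_def)
    have "(1::ennreal) = indicator (S n) x" using n by simp
    also have "\<dots> \<le> (SUP n. indicator (S n) x)" by (rule SUP_upper) simp
    finally show "1 \<le> (SUP n. indicator (S n) x :: ennreal)" .
  qed
  then show ?thesis using True by simp
next
  case False
  then show ?thesis by (simp add: indicator_def)
qed

lemma nn_integral_SUP_sets:
  assumes inc: "incseq S" and [measurable]: "\<And>n. S n \<in> sets borel" "f \<in> borel_measurable borel"
  shows "(\<integral>\<^sup>+x. f x * indicator (\<Union>n. S n) x \<partial>(lborel::real measure)) = (SUP n. \<integral>\<^sup>+x. f x * indicator (S n) x \<partial>lborel)"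
proof -
  have "(\<integral>\<^sup>+x. f x * indicator (\<Union>n. S n) x \<partial>lborel) = (\<integral>\<^sup>+x. (SUP n. f x * indicator (S n) x) \<partial>lborel)"
    by (rule nn_integral_cong) (simp add: SUP_mult_left_ennreal[symmetric] SUP_ind[OF inc])
  also have "\<dots> = (SUP n. \<integral>\<^sup>+x. f x * indicator (S n) x \<partial>lborel)"
  proof (rule nn_integral_monotone_convergence_SUP)
    show "incseq (\<lambda>n x. f x * indicator (S n) x)"
      using inc by (auto simp: incseq_def le_fun_def indicator_def subset_eq intro!: mult_left_mono)
  qed measurable
  finally show ?thesis .
qed

lemma nn_integral_exp_subst:
  assumes [measurable]: "L \<in> borel_measurable borel"
  shows "(\<integral>\<^sup>+e. L e * indicator {0<..} e \<partial>lborel) = (\<integral>\<^sup>+t. L (exp t) * ennreal (exp t) \<partial>lborel)"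
proof -
  define S where "S n = {exp (- real n - 1) .. exp (real n + 1)}" for n :: nat
  define T where "T n = {- real n - 1 .. real n + 1}" for n :: nat
  have incS: "incseq S" unfolding S_def incseq_def by auto
  have incT: "incseq T" unfolding T_def incseq_def by auto
  have US: "(\<Union>n. S n) = {0<..}"
  proof
    show "(\<Union>n. S n) \<subseteq> {0<..}" by (auto simp: S_def) (meson exp_gt_zero less_le_trans)
    show "{0<..} \<subseteq> (\<Union>n. S n)"
    proof
      fix e :: real assume "e \<in> {0<..}"
      then have e: "e > 0" by simp
      obtain n :: nat where n: "\<bar>ln e\<bar> \<le> real n" using real_arch_simple by blast
      have "exp (- real n - 1) \<le> exp (ln e)" using n by (intro exp_mono) auto
      moreover have "exp (ln e) \<le> exp (real n + 1)" using n by (intro exp_mono) auto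
      ultimately have "e \<in> S n" using e by (simp add: S_def)
      then show "e \<in> (\<Union>n. S n)" by blast
    qed
  qed
  have UT: "(\<Union>n. T n) = UNIV"
  proof -
    have "x \<in> T (nat \<lceil>\<bar>x\<bar>\<rceil>)" for x :: real
      unfolding T_def by (auto simp: abs_le_iff) linarith+
    then show ?thesis by blast
  qed
  have eq: "(\<integral>\<^sup>+x. L x * indicator (S n) x \<partial>lborel) = (\<integral>\<^sup>+t. L (exp t) * ennreal (exp t) * indicator (T n) t \<partial>lborel)" for n
    unfolding S_def T_def
    by (rule nn_integral_substitution_aux[where g=exp and g'=exp]) (auto intro!: continuous_intros DERIV_exp)
  have "(\<integral>\<^sup>+e. L e * indicator {0<..} e \<partial>lborel) = (SUP n. \<integral>\<^sup>+x. L x * indicator (S n) x \<partial>lborel)"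
    unfolding US[symmetric] by (rule nn_integral_SUP_sets[OF incS]) (auto simp: S_def)
  also have "\<dots> = (SUP n. \<integral>\<^sup>+t. L (exp t) * ennreal (exp t) * indicator (T n) t \<partial>lborel)"
    using eq by simp
  also have "\<dots> = (\<integral>\<^sup>+t. L (exp t) * ennreal (exp t) * indicator (\<Union>n. T n) t \<partial>lborel)"
    by (rule nn_integral_SUP_sets[OF incT, symmetric]) (auto simp: T_def)
  also have "\<dots> = (\<integral>\<^sup>+t. L (exp t) * ennreal (exp t) \<partial>lborel)" by (simp add: UT)
  finally show ?thesis .
qed

lemma nn_integral_reflect:
  assumes [measurable]: "f \<in> borel_measurable borel"
  shows "(\<integral>\<^sup>+x. f x \<partial>lborel) = (\<integral>\<^sup>+x. f (- x) \<partial>(lborel::real measure))"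
proof -
  have "(\<integral>\<^sup>+x. f x \<partial>lborel) = (\<integral>\<^sup>+x. f x \<partial>distr lborel borel uminus)" by (simp add: lborel_distr_uminus)
  also have "\<dots> = (\<integral>\<^sup>+x. f (- x) \<partial>lborel)" by (subst nn_integral_distr) auto
  finally show ?thesis .
qed

lemma nn_integral_expm_subst:
  assumes [measurable]: "L \<in> borel_measurable borel"
  shows "(\<integral>\<^sup>+e. L e * indicator {0<..} e \<partial>lborel) = (\<integral>\<^sup>+t. L (exp (- t)) * ennreal (exp (- t)) \<partial>lborel)"
  by (subst nn_integral_exp_subst[OF assms], subst nn_integral_reflect) auto

lemma int_prod: fixes f :: "'a::euclidean_space \<times> 'b::euclidean_space \<Rightarrow> ennreal"
  assumes [measurable]: "f \<in> borel_measurable borel"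
  shows "(\<integral>\<^sup>+x. f x \<partial>lborel) = (\<integral>\<^sup>+x1. \<integral>\<^sup>+x2. f (x1, x2) \<partial>lborel \<partial>lborel)"
    "(\<integral>\<^sup>+x. f x \<partial>lborel) = (\<integral>\<^sup>+x2. \<integral>\<^sup>+x1. f (x1, x2) \<partial>lborel \<partial>lborel)"
proof -
  have m: "f \<in> borel_measurable (lborel \<Otimes>\<^sub>M lborel)" by (simp add: lborel_prod)
  show "(\<integral>\<^sup>+x. f x \<partial>lborel) = (\<integral>\<^sup>+x1. \<integral>\<^sup>+x2. f (x1, x2) \<partial>lborel \<partial>lborel)"
    using lborel.nn_integral_fst[OF m] by (simp add: lborel_prod)
  show "(\<integral>\<^sup>+x. f x \<partial>lborel) = (\<integral>\<^sup>+x2. \<integral>\<^sup>+x1. f (x1, x2) \<partial>lborel \<partial>lborel)"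
    using lborel_pair.nn_integral_snd[OF m] by (simp add: lborel_prod)
qed

lemma fubini_swap: fixes f :: "'a::euclidean_space \<Rightarrow> 'b::euclidean_space \<Rightarrow> ennreal"
  assumes [measurable]: "(\<lambda>p. f (fst p) (snd p)) \<in> borel_measurable borel"
  shows "(\<integral>\<^sup>+x. \<integral>\<^sup>+y. f x y \<partial>lborel \<partial>lborel) = (\<integral>\<^sup>+y. \<integral>\<^sup>+x. f x y \<partial>lborel \<partial>lborel)"
proof -
  have "(\<integral>\<^sup>+x. \<integral>\<^sup>+y. f x y \<partial>lborel \<partial>lborel) = (\<integral>\<^sup>+p. f (fst p) (snd p) \<partial>lborel)"
    using int_prod(1)[of "\<lambda>p. f (fst p) (snd p)"] by simp
  also have "\<dots> = (\<integral>\<^sup>+y. \<integral>\<^sup>+x. f x y \<partial>lborel \<partial>lborel)"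
    using int_prod(2)[of "\<lambda>p. f (fst p) (snd p)"] by simp
  finally show ?thesis .
qed

lemma nn_integral_sin_subst:
  assumes [measurable]: "f \<in> borel_measurable borel"
  shows "(\<integral>\<^sup>+x. f x * indicator {-1/2..1/2} x \<partial>lborel) =
    (\<integral>\<^sup>+\<theta>. f (sin (2*\<theta>)/2) * ennreal (cos (2*\<theta>)) * indicator {-pi/4..pi/4} \<theta> \<partial>lborel)"
proof -
  have "(\<integral>\<^sup>+x. f x * indicator {(\<lambda>\<theta>. sin (2*\<theta>)/2) (-pi/4)..(\<lambda>\<theta>. sin (2*\<theta>)/2) (pi/4)} x \<partial>lborel) =
    (\<integral>\<^sup>+\<theta>. f (sin (2*\<theta>)/2) * ennreal (cos (2*\<theta>)) * indicator {-pi/4..pi/4} \<theta> \<partial>lborel)"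
  proof (rule nn_integral_substitution_aux[where g="\<lambda>\<theta>. sin (2*\<theta>)/2" and g'="\<lambda>\<theta>. cos (2*\<theta>)"])
    show "((\<lambda>\<theta>. sin (2*\<theta>)/2) has_real_derivative cos (2*x)) (at x)" for x
      by (auto intro!: derivative_eq_intros)
    show "continuous_on {-pi/4..pi/4} (\<lambda>\<theta>. cos (2*\<theta>))" by (intro continuous_intros)
    show "x \<in> {-pi/4..pi/4} \<Longrightarrow> 0 \<le> cos (2*x)" for x by (intro cos_ge_zero) auto
  qed (auto simp: pi_gt_zero)
  then show ?thesis by simp
qed

definition Mb :: "real \<Rightarrow> real \<Rightarrow> real \<Rightarrow> real^2^2" where "Mb b c d = mat2 ((1 + b*c)/d) b c d"

lemma Mb_measurable[measurable]: "(\<lambda>x. Mb (f x) (g x) (h x)) \<in> borel_measurable M"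
  if [measurable]: "f \<in> borel_measurable M" "g \<in> borel_measurable M" "h \<in> borel_measurable M"
  unfolding Mb_def by measurable

lemma Mb_W: "Mb b c d \<in> W_set \<Longrightarrow> d > 0 \<and> \<bar>b * d\<bar> < 1/2"
  by (auto simp: Mb_def W_set_def)

lemma Fm_affine: assumes d: "d > 0" and e: "\<delta> > 0"
  shows "detq ((b*c/d + (1/d)*\<delta>, b), (c, d)) = \<delta>"
    "Fm ((b*c/d + (1/d)*\<delta>, b), (c, d)) = Mb (b / sqrt \<delta>) (c / sqrt \<delta>) (d / sqrt \<delta>)"
proof -
  show dq: "detq ((b*c/d + (1/d)*\<delta>, b), (c, d)) = \<delta>" using d by (simp add: detq_def field_simps)
  define s where "s = sqrt \<delta>"
  have s: "s > 0" "\<delta> = s * s" using e by (auto simp: s_def)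
  have "(b*c/d + (1/d)*\<delta>) / s = (1 + b / s * (c / s)) / (d / s)"
    using s d by (simp add: field_simps)
  then show "Fm ((b*c/d + (1/d)*\<delta>, b), (c, d)) = Mb (b / sqrt \<delta>) (c / sqrt \<delta>) (d / sqrt \<delta>)"
    unfolding Fm_def Mb_def dq s_def[symmetric] by simp
qed

lemma detq_affine: "d > 0 \<Longrightarrow> detq ((b*c/d + (1/d)*\<delta>, b), (c, d)) = \<delta>"
  by (simp add: detq_def field_simps)

lemma step_a:
  assumes A[measurable]: "A \<in> sets borel" and AW: "A \<subseteq> W_set"
  shows "(\<integral>\<^sup>+a. rho ((a,b),(c,d)) * indicator A (Fm ((a,b),(c,d))) \<partial>lborel) =
    indicator {0<..} d * ennreal (1/d) *
      (\<integral>\<^sup>+\<delta>. 2 * indicator {0<..1} \<delta> * indicator A (Mb (b/sqrt \<delta>) (c/sqrt \<delta>) (d/sqrt \<delta>)) \<partial>lborel)"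
proof (cases "d > 0")
  case False
  have "rho ((a,b),(c,d)) * indicator A (Fm ((a,b),(c,d))) = 0" for a
  proof (cases "rho ((a,b),(c,d)) = 0")
    case False
    then have p: "0 < detq ((a,b),(c,d))" using rho_nz by blast
    have "Fm ((a,b),(c,d)) $ 2 $ 2 = d / sqrt (detq ((a,b),(c,d)))" by (simp add: Fm_def)
    also have "\<dots> \<le> 0" using \<open>\<not> d > 0\<close> p by (simp add: divide_nonpos_pos)
    finally have "Fm ((a,b),(c,d)) \<notin> W_set" by (auto simp: W_set_def)
    then show ?thesis using AW by (auto simp: indicator_def)
  qed simp
  then have "(\<integral>\<^sup>+a. rho ((a,b),(c,d)) * indicator A (Fm ((a,b),(c,d))) \<partial>lborel) = integral\<^sup>N lborel (\<lambda>a::real. 0)"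
    by (intro nn_integral_cong) simp
  then show ?thesis using False by simp
next
  case True
  let ?f = "\<lambda>a. rho ((a,b),(c,d)) * indicator A (Fm ((a,b),(c,d)))"
  have "(\<integral>\<^sup>+a. ?f a \<partial>lborel) = ennreal \<bar>1/d\<bar> * (\<integral>\<^sup>+\<delta>. ?f (b*c/d + (1/d) * \<delta>) \<partial>lborel)"
    by (rule nn_integral_real_affine) (use True in auto)
  also have "(\<integral>\<^sup>+\<delta>. ?f (b*c/d + (1/d) * \<delta>) \<partial>lborel) =
      (\<integral>\<^sup>+\<delta>. 2 * indicator {0<..1} \<delta> * indicator A (Mb (b/sqrt \<delta>) (c/sqrt \<delta>) (d/sqrt \<delta>)) \<partial>lborel)"
  proof (rule nn_integral_cong)
    fix \<delta> :: real
    show "?f (b*c/d + (1/d) * \<delta>) = 2 * indicator {0<..1} \<delta> * indicator A (Mb (b/sqrt \<delta>) (c/sqrt \<delta>) (d/sqrt \<delta>))"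
    proof (cases "\<delta> > 0")
      case True
      then show ?thesis using Fm_affine[OF \<open>d > 0\<close> True, of b c]
        by (simp add: rho_def Pset_def indicator_def)
    next
      case False
      then show ?thesis using detq_affine[OF \<open>d > 0\<close>, of b c \<delta>]
        by (simp add: rho_def Pset_def indicator_def)
    qed
  qed
  finally show ?thesis using True by simp
qed

definition nuf :: "(real^2^2) set \<Rightarrow> real \<times> real \<times> real \<Rightarrow> ennreal" where
  "nuf A y = indicator {0<..} (fst (snd y)) * ennreal (1 / fst (snd y)) * indicator A (Mb (snd (snd y)) (fst y) (fst (snd y)))"

lemma nuf_measurable[measurable]: assumes [measurable]: "A \<in> sets borel" shows "nuf A \<in> borel_measurable borel"
  unfolding nuf_def[abs_def] by measurable

lemma int_R3: assumes [measurable]: "f \<in> borel_measurable (borel :: (real \<times> real \<times> real) measure)"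
  shows "(\<integral>\<^sup>+y. f y \<partial>lborel) = (\<integral>\<^sup>+c. \<integral>\<^sup>+d. \<integral>\<^sup>+b. f (c, (d, b)) \<partial>lborel \<partial>lborel \<partial>lborel)"
proof -
  have "(\<integral>\<^sup>+y. f y \<partial>lborel) = (\<integral>\<^sup>+c. \<integral>\<^sup>+z. f (c, z) \<partial>lborel \<partial>lborel)" by (rule int_prod(1)) measurable
  also have "\<dots> = (\<integral>\<^sup>+c. \<integral>\<^sup>+d. \<integral>\<^sup>+b. f (c, (d, b)) \<partial>lborel \<partial>lborel \<partial>lborel)"
    by (rule nn_integral_cong) (rule int_prod(1), measurable)
  finally show ?thesis .
qed

lemma step3:
  assumes A[measurable]: "A \<in> sets borel" and e: "\<delta> > 0"
  shows "(\<integral>\<^sup>+y. indicator {0<..} (fst (snd y)) * ennreal (1 / fst (snd y)) *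
      indicator A (Mb (snd (snd y) / sqrt \<delta>) (fst y / sqrt \<delta>) (fst (snd y) / sqrt \<delta>)) \<partial>lborel) =
    ennreal \<delta> * (\<integral>\<^sup>+y. nuf A y \<partial>lborel)"
proof -
  define s where "s = sqrt \<delta>"
  have s: "s > 0" "s * s = \<delta>" using e by (auto simp: s_def)
  let ?f = "\<lambda>y::real\<times>real\<times>real. indicator {0<..} (fst (snd y)) * ennreal (1 / fst (snd y)) *
      indicator A (Mb (snd (snd y) / s) (fst y / s) (fst (snd y) / s))"
  have "(\<integral>\<^sup>+y. ?f y \<partial>lborel) = ennreal (\<bar>s\<bar> ^ DIM(real\<times>real\<times>real)) * (\<integral>\<^sup>+y. ?f (s *\<^sub>R y) \<partial>lborel)"
    by (rule nn_integral_scale) (use s in auto)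
  also have "(\<integral>\<^sup>+y. ?f (s *\<^sub>R y) \<partial>lborel) = (\<integral>\<^sup>+y. ennreal (1/s) * nuf A y \<partial>lborel)"
  proof (rule nn_integral_cong)
    fix y :: "real \<times> real \<times> real"
    obtain c d b where y: "y = (c, (d, b))" by (cases y) auto
    have "?f (s *\<^sub>R y) = indicator {0<..} (s * d) * ennreal (1 / (s * d)) * indicator A (Mb b c d)"
      using s by (simp add: y)
    also have "\<dots> = ennreal (1/s) * nuf A y"
    proof (cases "d > 0")
      case True
      then have "0 < s * d" using s by simp
      moreover have "ennreal (1 / (s * d)) = ennreal (1/s) * ennreal (1/d)"
        using s True by (simp add: ennreal_mult'[symmetric])
      ultimately show ?thesis using True by (simp add: nuf_def y mult_ac)
    next
      case False
      then have "\<not> 0 < s * d" using s by (simp add: zero_less_mult_iff)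
      then show ?thesis using False by (simp add: nuf_def y)
    qed
    finally show "?f (s *\<^sub>R y) = ennreal (1/s) * nuf A y" .
  qed
  also have "\<dots> = ennreal (1/s) * (\<integral>\<^sup>+y. nuf A y \<partial>lborel)"
    by (rule nn_integral_cmult) measurable
  also have "ennreal (\<bar>s\<bar> ^ DIM(real\<times>real\<times>real)) * (ennreal (1/s) * (\<integral>\<^sup>+y. nuf A y \<partial>lborel)) =
      ennreal \<delta> * (\<integral>\<^sup>+y. nuf A y \<partial>lborel)"
  proof -
    have "\<bar>s\<bar> ^ DIM(real\<times>real\<times>real) * (1/s) = \<delta>" using s by (simp add: power3_eq_cube)
    moreover have "ennreal (\<bar>s\<bar> ^ DIM(real\<times>real\<times>real) * (1/s)) = ennreal (\<bar>s\<bar> ^ DIM(real\<times>real\<times>real)) * ennreal (1/s)"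
      by (rule ennreal_mult) (use s in auto)
    ultimately have k: "ennreal (\<bar>s\<bar> ^ DIM(real\<times>real\<times>real)) * ennreal (1/s) = ennreal \<delta>" by simp
    show ?thesis by (simp only: mult.assoc[symmetric] k)
  qed
  finally show ?thesis by (simp add: s_def)
qed

lemma int_2x: "(\<integral>\<^sup>+x. ennreal (2 * x) * indicator {0..1} x \<partial>lborel) = 1"
proof -
  have "(\<integral>\<^sup>+x. ennreal (2 * x) * indicator {0..1} x \<partial>lborel) = ennreal ((\<lambda>x::real. x^2) 1 - (\<lambda>x. x^2) 0)"
    by (rule nn_integral_FTC_Icc[where F="\<lambda>x. x^2"]) (auto intro!: derivative_eq_intros)
  then show ?thesis by simp
qed

lemma lhs_nu:
  assumes A[measurable]: "A \<in> sets borel" and AW: "A \<subseteq> W_set"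
  shows "emeasure mu A = (\<integral>\<^sup>+y. nuf A y \<partial>lborel)"
proof -
  let ?H = "\<lambda>x. rho x * indicator A (Fm x)"
  let ?Q = "\<lambda>b c d \<delta>. 2 * indicator {0<..1} \<delta> * indicator A (Mb (b/sqrt \<delta>) (c/sqrt \<delta>) (d/sqrt \<delta>))"
  let ?P = "\<lambda>d. indicator {0<..} d * ennreal (1/d)"
  have "emeasure mu A = (\<integral>\<^sup>+x. ?H x \<partial>lborel)" by (rule emeasure_mu) measurable
  also have "\<dots> = (\<integral>\<^sup>+x2. \<integral>\<^sup>+x1. ?H (x1, x2) \<partial>lborel \<partial>lborel)" by (rule int_prod(2)) measurable
  also have "\<dots> = (\<integral>\<^sup>+x2. \<integral>\<^sup>+b. \<integral>\<^sup>+a. ?H ((a, b), x2) \<partial>lborel \<partial>lborel \<partial>lborel)"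
    by (rule nn_integral_cong) (rule int_prod(2), measurable)
  also have "\<dots> = (\<integral>\<^sup>+c. \<integral>\<^sup>+d. \<integral>\<^sup>+b. \<integral>\<^sup>+a. ?H ((a, b), (c, d)) \<partial>lborel \<partial>lborel \<partial>lborel \<partial>lborel)"
    by (rule int_prod(1)) measurable
  also have "\<dots> = (\<integral>\<^sup>+c. \<integral>\<^sup>+d. \<integral>\<^sup>+b. ?P d * (\<integral>\<^sup>+\<delta>. ?Q b c d \<delta> \<partial>lborel) \<partial>lborel \<partial>lborel \<partial>lborel)"
    by (simp only: step_a[OF A AW])
  also have "\<dots> = (\<integral>\<^sup>+y. ?P (fst (snd y)) * (\<integral>\<^sup>+\<delta>. ?Q (snd (snd y)) (fst y) (fst (snd y)) \<delta> \<partial>lborel) \<partial>lborel)"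
  proof -
    have "(\<integral>\<^sup>+y. ?P (fst (snd y)) * (\<integral>\<^sup>+\<delta>. ?Q (snd (snd y)) (fst y) (fst (snd y)) \<delta> \<partial>lborel) \<partial>lborel) =
      (\<integral>\<^sup>+c. \<integral>\<^sup>+d. \<integral>\<^sup>+b. ?P (fst (snd (c,(d,b)))) * (\<integral>\<^sup>+\<delta>. ?Q (snd (snd (c,(d,b)))) (fst (c,(d,b))) (fst (snd (c,(d,b)))) \<delta> \<partial>lborel) \<partial>lborel \<partial>lborel \<partial>lborel)"
      by (rule int_R3) measurable
    then show ?thesis by simp
  qed
  also have "\<dots> = (\<integral>\<^sup>+y. \<integral>\<^sup>+\<delta>. ?P (fst (snd y)) * ?Q (snd (snd y)) (fst y) (fst (snd y)) \<delta> \<partial>lborel \<partial>lborel)"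
    by (rule nn_integral_cong) (rule nn_integral_cmult[symmetric], measurable)
  also have "\<dots> = (\<integral>\<^sup>+\<delta>. \<integral>\<^sup>+y. ?P (fst (snd y)) * ?Q (snd (snd y)) (fst y) (fst (snd y)) \<delta> \<partial>lborel \<partial>lborel)"
    by (rule fubini_swap) measurable
  also have "\<dots> = (\<integral>\<^sup>+\<delta>. ennreal (2 * \<delta>) * indicator {0..1} \<delta> * (\<integral>\<^sup>+y. nuf A y \<partial>lborel) \<partial>lborel)"
  proof (rule nn_integral_cong)
    fix \<delta> :: real
    show "(\<integral>\<^sup>+y. ?P (fst (snd y)) * ?Q (snd (snd y)) (fst y) (fst (snd y)) \<delta> \<partial>lborel) =
        ennreal (2 * \<delta>) * indicator {0..1} \<delta> * (\<integral>\<^sup>+y. nuf A y \<partial>lborel)"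
    proof (cases "0 < \<delta> \<and> \<delta> \<le> 1")
      case True
      have "(\<integral>\<^sup>+y. ?P (fst (snd y)) * ?Q (snd (snd y)) (fst y) (fst (snd y)) \<delta> \<partial>lborel) =
          (\<integral>\<^sup>+y. 2 * (indicator {0<..} (fst (snd y)) * ennreal (1 / fst (snd y)) *
            indicator A (Mb (snd (snd y) / sqrt \<delta>) (fst y / sqrt \<delta>) (fst (snd y) / sqrt \<delta>))) \<partial>lborel)"
        by (rule nn_integral_cong) (use True in \<open>simp add: mult_ac\<close>)
      also have "\<dots> = 2 * (\<integral>\<^sup>+y. indicator {0<..} (fst (snd y)) * ennreal (1 / fst (snd y)) *
            indicator A (Mb (snd (snd y) / sqrt \<delta>) (fst y / sqrt \<delta>) (fst (snd y) / sqrt \<delta>)) \<partial>lborel)"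
        by (rule nn_integral_cmult) measurable
      also have "\<dots> = 2 * (ennreal \<delta> * (\<integral>\<^sup>+y. nuf A y \<partial>lborel))"
        using step3[OF A, of \<delta>] True by simp
      also have "\<dots> = ennreal (2 * \<delta>) * indicator {0..1} \<delta> * (\<integral>\<^sup>+y. nuf A y \<partial>lborel)"
        using True by (simp add: ennreal_mult mult.assoc)
      finally show ?thesis .
    next
      case False
      then have "indicator {0<..1} \<delta> = (0::ennreal)" by (simp add: indicator_def)
      moreover have "ennreal (2 * \<delta>) * indicator {0..1} \<delta> = 0"
        using False by (cases "\<delta> = 0") (auto simp: indicator_def)
      ultimately show ?thesis by simp
    qed
  qed
  also have "\<dots> = (\<integral>\<^sup>+\<delta>. ennreal (2 * \<delta>) * indicator {0..1} \<delta> \<partial>lborel) * (\<integral>\<^sup>+y. nuf A y \<partial>lborel)"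
    by (rule nn_integral_multc) measurable
  also have "\<dots> = (\<integral>\<^sup>+y. nuf A y \<partial>lborel)" by (simp add: int_2x)
  finally show ?thesis .
qed

definition G :: "(real^2^2) set \<Rightarrow> real \<Rightarrow> real \<Rightarrow> ennreal" where
  "G A b d = (\<integral>\<^sup>+c. indicator A (Mb b c d) \<partial>lborel)"

lemma G_measurable[measurable]:
  assumes [measurable]: "A \<in> sets borel" "f \<in> borel_measurable M" "g \<in> borel_measurable M"
  shows "(\<lambda>x. G A (f x) (g x)) \<in> borel_measurable M"
proof -
  have "(\<lambda>p. G A (fst p) (snd p)) \<in> borel_measurable (borel :: (real \<times> real) measure)"
    unfolding G_def by measurable
  then have "(\<lambda>x. (\<lambda>p. G A (fst p) (snd p)) (f x, g x)) \<in> borel_measurable M"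
    by measurable
  then show ?thesis by simp
qed

lemma Mb_cm:
  assumes c: "cos \<theta> \<noteq> 0"
  shows "Mb (- exp t * sin \<theta>) (exp (-t) * sin \<theta> + exp (-t) * cos \<theta> * u) (exp (-t) * cos \<theta>) = coord_map (t, \<theta>, u)"
proof -
  have e: "exp t * exp (-t) = 1" by (simp add: exp_minus)
  have "1 + (- exp t * sin \<theta>) * (exp (-t) * sin \<theta> + exp (-t) * cos \<theta> * u) =
      1 - (exp t * exp (-t)) * (sin \<theta> * sin \<theta> + sin \<theta> * cos \<theta> * u)" by algebra
  also have "\<dots> = cos \<theta> * (cos \<theta> - u * sin \<theta>)" unfolding e
    using sin_cos_squared_add3[of \<theta>] by algebra
  finally have n: "1 + (- exp t * sin \<theta>) * (exp (-t) * sin \<theta> + exp (-t) * cos \<theta> * u) = cos \<theta> * (cos \<theta> - u * sin \<theta>)" .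
  have "cos \<theta> * (cos \<theta> - u * sin \<theta>) / (exp (-t) * cos \<theta>) = exp t * (cos \<theta> - u * sin \<theta>)"
    using c by (simp add: exp_minus field_simps)
  then show ?thesis unfolding Mb_def coord_map_eq n
    by (simp add: mat2_eq_iff algebra_simps)
qed

lemma step9:
  assumes A[measurable]: "A \<in> sets borel" and c: "cos \<theta> > 0"
  shows "(\<integral>\<^sup>+u. indicator A (coord_map (t, \<theta>, u)) \<partial>lborel) =
    ennreal (exp t / cos \<theta>) * G A (- exp t * sin \<theta>) (exp (-t) * cos \<theta>)"
proof -
  define k where "k = exp (-t) * cos \<theta>"
  have k: "k > 0" using c by (simp add: k_def)
  have "G A (- exp t * sin \<theta>) k = ennreal \<bar>k\<bar> * (\<integral>\<^sup>+u. indicator A (Mb (- exp t * sin \<theta>) (exp (-t) * sin \<theta> + k * u) k) \<partial>lborel)"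
    unfolding G_def by (rule nn_integral_real_affine) (use k in auto)
  also have "(\<integral>\<^sup>+u. indicator A (Mb (- exp t * sin \<theta>) (exp (-t) * sin \<theta> + k * u) k) \<partial>lborel) =
      (\<integral>\<^sup>+u. indicator A (coord_map (t, \<theta>, u)) \<partial>lborel)"
    unfolding k_def using Mb_cm[of \<theta> t] c by (simp add: mult.assoc)
  finally have h: "G A (- exp t * sin \<theta>) k = ennreal k * (\<integral>\<^sup>+u. indicator A (coord_map (t, \<theta>, u)) \<partial>lborel)"
    using k by simp
  have "ennreal (exp t / cos \<theta>) * ennreal k = 1"
  proof -
    have "exp t / cos \<theta> * k = 1" using c by (simp add: k_def exp_minus field_simps)
    then show ?thesis using k c by (simp add: ennreal_mult[symmetric])
  qed
  then show ?thesis unfolding k_def[symmetric] h by (simp add: mult.assoc[symmetric])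
qed

definition Hx :: "(real^2^2) set \<Rightarrow> real \<Rightarrow> ennreal" where
  "Hx A x = (\<integral>\<^sup>+d. indicator {0<..} d * ennreal (1/d) * ennreal (1/d) * G A ((1/d) * x) d \<partial>lborel)"

lemma Hx_measurable[measurable]: assumes [measurable]: "A \<in> sets borel" shows "Hx A \<in> borel_measurable borel"
  unfolding Hx_def[abs_def] by measurable

lemma ennreal4: "0 \<le> a \<Longrightarrow> 0 \<le> b \<Longrightarrow> 0 \<le> c \<Longrightarrow>
    ennreal a * (ennreal b * ennreal b * X * ennreal c) = ennreal (a*b*b*c) * X"
proof -
  assume "0 \<le> a" "0 \<le> b" "0 \<le> c"
  then have "ennreal (a*b*b*c) = ennreal a * ennreal b * ennreal b * ennreal c"
    by (simp add: ennreal_mult)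
  then show ?thesis by (simp add: mult_ac)
qed

lemma step8:
  assumes A[measurable]: "A \<in> sets borel" and c: "cos \<theta> > 0"
  shows "Hx A (- (sin (2*\<theta>) / 2)) = (\<integral>\<^sup>+t. ennreal (exp t / cos \<theta>) * G A (- exp t * sin \<theta>) (exp (-t) * cos \<theta>) \<partial>lborel)"
proof -
  let ?f = "\<lambda>d. indicator {0<..} d * ennreal (1/d) * ennreal (1/d) * G A ((1/d) * (- (sin (2*\<theta>) / 2))) d"
  let ?L = "\<lambda>e. ennreal (1/(cos \<theta> * e)) * ennreal (1/(cos \<theta> * e)) * G A (- sin \<theta> / e) (cos \<theta> * e)"
  have "Hx A (- (sin (2*\<theta>) / 2)) = ennreal \<bar>cos \<theta>\<bar> * (\<integral>\<^sup>+e. ?f (0 + cos \<theta> * e) \<partial>lborel)"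
    unfolding Hx_def by (rule nn_integral_real_affine) (use c in auto)
  also have "(\<integral>\<^sup>+e. ?f (0 + cos \<theta> * e) \<partial>lborel) = (\<integral>\<^sup>+e. ?L e * indicator {0<..} e \<partial>lborel)"
  proof (rule nn_integral_cong)
    fix e :: real
    show "?f (0 + cos \<theta> * e) = ?L e * indicator {0<..} e"
    proof (cases "e > 0")
      case True
      have sd: "sin (2 * \<theta>) = 2 * sin \<theta> * cos \<theta>" by (rule sin_double)
      have "1 / (cos \<theta> * e) * - (sin (2 * \<theta>) / 2) = - sin \<theta> / e"
        unfolding sd using c True by (simp add: field_simps)
      then show ?thesis using True c by (simp add: mult_ac)
    next
      case False
      then have "\<not> 0 < cos \<theta> * e" using c by (simp add: zero_less_mult_iff)
      then show ?thesis using False by simp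
    qed
  qed
  also have "\<dots> = (\<integral>\<^sup>+t. ?L (exp (- t)) * ennreal (exp (- t)) \<partial>lborel)"
    by (rule nn_integral_expm_subst) measurable
  also have "ennreal \<bar>cos \<theta>\<bar> * \<dots> = (\<integral>\<^sup>+t. ennreal \<bar>cos \<theta>\<bar> * (?L (exp (- t)) * ennreal (exp (- t))) \<partial>lborel)"
    by (rule nn_integral_cmult[symmetric]) measurable
  also have "\<dots> = (\<integral>\<^sup>+t. ennreal (exp t / cos \<theta>) * G A (- exp t * sin \<theta>) (exp (-t) * cos \<theta>) \<partial>lborel)"
  proof (rule nn_integral_cong)
    fix t :: real
    have r: "\<bar>cos \<theta>\<bar> * (1 / (cos \<theta> * exp (-t))) * (1 / (cos \<theta> * exp (-t))) * exp (-t) = exp t / cos \<theta>"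
      using c by (simp add: exp_minus field_simps power2_eq_square)
    have s: "- sin \<theta> / exp (-t) = - exp t * sin \<theta>" by (simp add: exp_minus field_simps)
    have "ennreal \<bar>cos \<theta>\<bar> * (?L (exp (- t)) * ennreal (exp (- t))) =
        ennreal (\<bar>cos \<theta>\<bar> * (1 / (cos \<theta> * exp (-t))) * (1 / (cos \<theta> * exp (-t))) * exp (-t)) * G A (- sin \<theta> / exp (-t)) (cos \<theta> * exp (-t))"
      by (rule ennreal4) (use c in auto)
    then show "ennreal \<bar>cos \<theta>\<bar> * (?L (exp (- t)) * ennreal (exp (- t))) = ennreal (exp t / cos \<theta>) * G A (- exp t * sin \<theta>) (exp (-t) * cos \<theta>)"
      unfolding r s by (simp add: mult.commute)
  qed
  finally show ?thesis .
qed

lemma G_zero: assumes AW: "A \<subseteq> W_set" and d: "d > 0" and x: "\<not> \<bar>x\<bar> < 1/2"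
  shows "G A ((1/d) * x) d = 0"
proof -
  have "indicator A (Mb ((1/d) * x) c d) = (0::ennreal)" for c
  proof -
    have "Mb ((1/d) * x) c d \<notin> W_set"
    proof
      assume "Mb ((1/d) * x) c d \<in> W_set"
      then have "\<bar>(1/d) * x * d\<bar> < 1/2" using Mb_W by blast
      then show False using d x by simp
    qed
    then show ?thesis using AW by (auto simp: indicator_def)
  qed
  then show ?thesis by (simp add: G_def)
qed

lemma nu_theta:
  assumes A[measurable]: "A \<in> sets borel" and AW: "A \<subseteq> W_set"
  shows "(\<integral>\<^sup>+y. nuf A y \<partial>lborel) =
    (\<integral>\<^sup>+\<theta>. Hx A (- (sin (2*\<theta>) / 2)) * ennreal (cos (2*\<theta>)) * indicator {-pi/4..pi/4} \<theta> \<partial>lborel)"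
proof -
  let ?P = "\<lambda>d. indicator {0<..} d * ennreal (1/d)"
  have "(\<integral>\<^sup>+y. nuf A y \<partial>lborel) = (\<integral>\<^sup>+z. \<integral>\<^sup>+c. nuf A (c, z) \<partial>lborel \<partial>lborel)"
    by (rule int_prod(2)) measurable
  also have "\<dots> = (\<integral>\<^sup>+d. \<integral>\<^sup>+b. \<integral>\<^sup>+c. nuf A (c, (d, b)) \<partial>lborel \<partial>lborel \<partial>lborel)"
    by (rule int_prod(1)) measurable
  also have "\<dots> = (\<integral>\<^sup>+d. \<integral>\<^sup>+b. ?P d * G A b d \<partial>lborel \<partial>lborel)"
    by (intro nn_integral_cong) (simp add: nuf_def G_def nn_integral_cmult[symmetric])
  also have "\<dots> = (\<integral>\<^sup>+d. \<integral>\<^sup>+x. ?P d * ennreal (1/d) * G A ((1/d) * x) d \<partial>lborel \<partial>lborel)"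
  proof (rule nn_integral_cong)
    fix d :: real
    show "(\<integral>\<^sup>+b. ?P d * G A b d \<partial>lborel) = (\<integral>\<^sup>+x. ?P d * ennreal (1/d) * G A ((1/d) * x) d \<partial>lborel)"
    proof (cases "d > 0")
      case True
      have "(\<integral>\<^sup>+b. G A b d \<partial>lborel) = ennreal \<bar>1/d\<bar> * (\<integral>\<^sup>+x. G A (0 + (1/d) * x) d \<partial>lborel)"
        by (rule nn_integral_real_affine) (use True in auto)
      then have "(\<integral>\<^sup>+b. ?P d * G A b d \<partial>lborel) = ?P d * (ennreal (1/d) * (\<integral>\<^sup>+x. G A ((1/d) * x) d \<partial>lborel))"
        using True by (simp add: nn_integral_cmult)
      also have "\<dots> = (\<integral>\<^sup>+x. ?P d * ennreal (1/d) * G A ((1/d) * x) d \<partial>lborel)"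
        by (simp add: nn_integral_cmult mult.assoc)
      finally show ?thesis .
    qed simp
  qed
  also have "\<dots> = (\<integral>\<^sup>+x. \<integral>\<^sup>+d. ?P d * ennreal (1/d) * G A ((1/d) * x) d \<partial>lborel \<partial>lborel)"
    by (rule fubini_swap) measurable
  also have "\<dots> = (\<integral>\<^sup>+x. Hx A x * indicator {-1/2..1/2} x \<partial>lborel)"
  proof (rule nn_integral_cong)
    fix x :: real
    show "(\<integral>\<^sup>+d. ?P d * ennreal (1/d) * G A ((1/d) * x) d \<partial>lborel) = Hx A x * indicator {-1/2..1/2} x"
    proof (cases "\<bar>x\<bar> < 1/2")
      case True
      then have "indicator {-1/2..1/2} x = (1::ennreal)" by (auto simp: indicator_def abs_less_iff)
      then show ?thesis by (simp add: Hx_def)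
    next
      case False
      have z: "(\<integral>\<^sup>+d. ?P d * ennreal (1/d) * G A ((1/d) * x) d \<partial>lborel) = integral\<^sup>N lborel (\<lambda>d::real. 0)"
      proof (rule nn_integral_cong)
        fix d :: real
        show "?P d * ennreal (1/d) * G A ((1/d) * x) d = 0"
          using G_zero[OF AW _ False, of d] by (cases "d > 0") auto
      qed
      have "Hx A x = (\<integral>\<^sup>+d. ?P d * ennreal (1/d) * G A ((1/d) * x) d \<partial>lborel)"
        unfolding Hx_def by (rule refl)
      then show ?thesis using z by simp
    qed
  qed
  also have "\<dots> = (\<integral>\<^sup>+x. Hx A (- x) * indicator {-1/2..1/2} x \<partial>lborel)"
    by (subst nn_integral_reflect) (auto simp: indicator_def intro!: nn_integral_cong)
  also have "\<dots> = (\<integral>\<^sup>+\<theta>. Hx A (- (sin (2*\<theta>) / 2)) * ennreal (cos (2*\<theta>)) * indicator {-pi/4..pi/4} \<theta> \<partial>lborel)"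
    by (rule nn_integral_sin_subst[where f="\<lambda>x. Hx A (- x)"]) measurable
  finally show ?thesis .
qed

lemma coord_map_fun: "coord_map = (\<lambda>p. mat2 (exp (fst p) * (cos (fst (snd p)) - snd (snd p) * sin (fst (snd p))))
    (- exp (fst p) * sin (fst (snd p)))
    (exp (- fst p) * (sin (fst (snd p)) + snd (snd p) * cos (fst (snd p)))) (exp (- fst p) * cos (fst (snd p))))"
  by (rule ext, clarify) (simp add: coord_map_eq)

lemma coord_map_measurable[measurable]: "coord_map \<in> borel_measurable borel"
  unfolding coord_map_fun by measurable

lemma coord_set_measurable[measurable]: assumes [measurable]: "A \<in> sets borel"
  shows "coord_dom \<inter> coord_map -` A \<in> sets borel"
proof -
  have "coord_dom \<in> sets borel" by (simp add: borel_open open_coord_dom)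
  moreover have "coord_map -` A \<in> sets borel" using measurable_sets_borel[OF coord_map_measurable assms] by simp
  ultimately show ?thesis by simp
qed

lemma density_formula:
  assumes A[measurable]: "A \<in> sets borel" and AW: "A \<subseteq> W_set"
  shows "emeasure mu A = (\<integral>\<^sup>+ p. indicator (coord_dom \<inter> coord_map -` A) p
                        * ennreal (cos (2 * fst (snd p))) \<partial>lborel)"
proof -
  let ?f = "\<lambda>p. indicator (coord_dom \<inter> coord_map -` A) p * ennreal (cos (2 * fst (snd p)))"
  have "(\<integral>\<^sup>+ p. ?f p \<partial>lborel) = (\<integral>\<^sup>+t. \<integral>\<^sup>+z. ?f (t, z) \<partial>lborel \<partial>lborel)"
    by (rule int_prod(1)) measurable
  also have "\<dots> = (\<integral>\<^sup>+t. \<integral>\<^sup>+\<theta>. \<integral>\<^sup>+u. ?f (t, (\<theta>, u)) \<partial>lborel \<partial>lborel \<partial>lborel)"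
    by (rule nn_integral_cong) (rule int_prod(1), measurable)
  also have "\<dots> = (\<integral>\<^sup>+\<theta>. \<integral>\<^sup>+t. \<integral>\<^sup>+u. ?f (t, (\<theta>, u)) \<partial>lborel \<partial>lborel \<partial>lborel)"
    by (rule fubini_swap) measurable
  also have "\<dots> = (\<integral>\<^sup>+\<theta>. Hx A (- (sin (2*\<theta>) / 2)) * ennreal (cos (2*\<theta>)) * indicator {-pi/4..pi/4} \<theta> \<partial>lborel)"
  proof (rule nn_integral_cong)
    fix \<theta> :: real
    show "(\<integral>\<^sup>+t. \<integral>\<^sup>+u. ?f (t, (\<theta>, u)) \<partial>lborel \<partial>lborel) = Hx A (- (sin (2*\<theta>) / 2)) * ennreal (cos (2*\<theta>)) * indicator {-pi/4..pi/4} \<theta>"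
    proof (cases "\<bar>\<theta>\<bar> < pi/4")
      case True
      have c: "cos \<theta> > 0" using True by (intro cos_gt_zero_pi) auto
      have "(\<integral>\<^sup>+t. \<integral>\<^sup>+u. ?f (t, (\<theta>, u)) \<partial>lborel \<partial>lborel) =
          (\<integral>\<^sup>+t. (\<integral>\<^sup>+u. indicator A (coord_map (t, \<theta>, u)) \<partial>lborel) * ennreal (cos (2*\<theta>)) \<partial>lborel)"
      proof (rule nn_integral_cong)
        fix t :: real
        have "(\<integral>\<^sup>+u. ?f (t, (\<theta>, u)) \<partial>lborel) = (\<integral>\<^sup>+u. indicator A (coord_map (t, \<theta>, u)) * ennreal (cos (2*\<theta>)) \<partial>lborel)"
          by (rule nn_integral_cong) (use True in \<open>simp add: coord_dom_iff indicator_def\<close>)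
        also have "\<dots> = (\<integral>\<^sup>+u. indicator A (coord_map (t, \<theta>, u)) \<partial>lborel) * ennreal (cos (2*\<theta>))"
          by (rule nn_integral_multc) measurable
        finally show "(\<integral>\<^sup>+u. ?f (t, (\<theta>, u)) \<partial>lborel) = (\<integral>\<^sup>+u. indicator A (coord_map (t, \<theta>, u)) \<partial>lborel) * ennreal (cos (2*\<theta>))" .
      qed
      also have "\<dots> = (\<integral>\<^sup>+t. \<integral>\<^sup>+u. indicator A (coord_map (t, \<theta>, u)) \<partial>lborel \<partial>lborel) * ennreal (cos (2*\<theta>))"
        by (rule nn_integral_multc) measurable
      also have "(\<integral>\<^sup>+t. \<integral>\<^sup>+u. indicator A (coord_map (t, \<theta>, u)) \<partial>lborel \<partial>lborel) = Hx A (- (sin (2*\<theta>) / 2))"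
        by (simp only: step9[OF A c] step8[OF A c])
      moreover have "indicator {-pi/4..pi/4} \<theta> = (1::ennreal)" using True by (auto simp: indicator_def abs_less_iff)
      ultimately show ?thesis by simp
    next
      case False
      have z: "(\<integral>\<^sup>+t. \<integral>\<^sup>+u. ?f (t, (\<theta>, u)) \<partial>lborel \<partial>lborel) = 0"
        using False by (simp add: coord_dom_iff indicator_def)
      show ?thesis
      proof (cases "\<bar>\<theta>\<bar> = pi/4")
        case True
        then have "2*\<theta> = pi/2 \<or> 2*\<theta> = -(pi/2)" by (cases "\<theta> < 0") auto
        then have "cos (2*\<theta>) = 0"
        proof (elim disjE)
          assume h: "2*\<theta> = pi/2" show ?thesis unfolding h by simp
        next
          assume h: "2*\<theta> = -(pi/2)" show ?thesis unfolding h by simp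
        qed
        then show ?thesis using z by simp
      next
        case False
        then have "\<theta> \<notin> {-pi/4..pi/4}" using \<open>\<not> \<bar>\<theta>\<bar> < pi/4\<close> by auto
        then show ?thesis using z by simp
      qed
    qed
  qed
  also have "\<dots> = (\<integral>\<^sup>+y. nuf A y \<partial>lborel)" by (rule nu_theta[OF A AW, symmetric])
  also have "\<dots> = emeasure mu A" by (rule lhs_nu[OF A AW, symmetric])
  finally show ?thesis ..
qed

theorem proposition3p1:
  shows "bij_betw coord_map coord_dom W_set
     \<and> smooth_on coord_dom coord_map
     \<and> (\<exists>U \<Psi>. open U \<and> W_set \<subseteq> U \<and> smooth_on U (\<Psi> :: real^2^2 \<Rightarrow> real \<times> real \<times> real)
              \<and> (\<forall>p\<in>coord_dom. \<Psi> (coord_map p) = p))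
     \<and> (\<exists>\<mu>. haar_SL2 \<mu> \<and>
          (\<forall>A\<in>sets borel. A \<subseteq> W_set \<longrightarrow>
             emeasure \<mu> A =
               (\<integral>\<^sup>+ p. indicator (coord_dom \<inter> coord_map -` A) p
                        * ennreal (cos (2 * fst (snd p))) \<partial>lborel)))"
proof (intro conjI)
  show "bij_betw coord_map coord_dom W_set" by (rule bij)
  show "smooth_on coord_dom coord_map" by (rule smooth_coord_map)
  show "\<exists>U \<Psi>. open U \<and> W_set \<subseteq> U \<and> smooth_on U (\<Psi> :: real^2^2 \<Rightarrow> real \<times> real \<times> real)
              \<and> (\<forall>p\<in>coord_dom. \<Psi> (coord_map p) = p)"
  proof (intro exI conjI)
    show "open U0" by (rule open_U0)
    show "W_set \<subseteq> U0" by (rule W_U0)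
    show "smooth_on U0 Psi" by (rule smooth_Psi)
    show "\<forall>p\<in>coord_dom. Psi (coord_map p) = p" using Psi_cm coord_dom_iff by auto
  qed
  show "\<exists>\<mu>. haar_SL2 \<mu> \<and>
          (\<forall>A\<in>sets borel. A \<subseteq> W_set \<longrightarrow>
             emeasure \<mu> A =
               (\<integral>\<^sup>+ p. indicator (coord_dom \<inter> coord_map -` A) p
                        * ennreal (cos (2 * fst (snd p))) \<partial>lborel))"
    using haar_mu density_formula by blast
qed

end
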